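(* Let $Alg$ be a classical Cholesky decomposition algorithm for $n{\times}n$ matrices implemented on a machine with a constant number $d$ of memory levels of sizes $M_1\le\cdots\le M_d$, inverse bandwidths $\beta_1\le\cdots\le\beta_d$ and latencies $\alpha_1\le\cdots\le\alpha_d$. Then the bandwidth cost of $Alg$ is $$\Omega\!\left(\sum_{i=1}^{d-1}\beta_i\left(\frac{n^3}{\sqrt{M_i}}-M_i\right)\right)$$ and the latency cost of $Alg$ is $$\Omega\!\left(\sum_{i=1}^{d-1}\alpha_i\,\frac{n^3}{M_i^{3/2}}\right).$$
   Context: The Cholesky decomposition of a real symmetric positive definite matrix $A$ is $A = LL^T$ with $L$ lower triangular; its entries satisfy $L(i,i)=\sqrt{A(i,i)-\sum_{k=1}^{i-1}L(i,k)^2}$ and $L(i,j)=\frac{1}{L(j,j)}\big(A(i,j)-\sum_{k=1}^{j-1}L(i,k)L(j,k)\big)$ for $i>j$. A "classical" Cholesky algorithm performs exactly these arithmetic operations, possibly reordered using only associativity and commutativity of addition (no pivoting, no distributivity). Hierarchical memory model: a sequential machine with $d$ levels of memory, level $i$ of size $M_i$ words; moving a message of $w$ contiguous words between level $i$ and the next slower level costs $\alpha_i+\beta_i w$. The input matrix initially resides in the slowest level. Bandwidth cost here is the sum over levels of $\beta_i$ times the number of words moved across that level boundary, and latency cost the sum over levels of $\alpha_i$ times the number of messages moved across that boundary. *)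

theory Defs
  imports Complex_Main "HOL-Library.Multiset"
begin

text \<open>Values handled by the machine are symbolic expressions over the input
entries A(i,j) (stored only for j \<le> i, A being symmetric).\<close>

datatype sexp =
    Var nat nat
  | Plus sexp sexp
  | Minus sexp sexp
  | Times sexp sexp
  | Divide sexp sexp
  | Sqroot sexp

fun is_var :: "sexp \<Rightarrow> bool" where
  "is_var (Var _ _) = True"
| "is_var _ = False"

fun subterms :: "sexp \<Rightarrow> sexp set" where
  "subterms (Var i j) = {Var i j}"
| "subterms (Plus a b) = insert (Plus a b) (subterms a \<union> subterms b)"
| "subterms (Minus a b) = insert (Minus a b) (subterms a \<union> subterms b)"
| "subterms (Times a b) = insert (Times a b) (subterms a \<union> subterms b)"
| "subterms (Divide a b) = insert (Divide a b) (subterms a \<union> subterms b)"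
| "subterms (Sqroot a) = insert (Sqroot a) (subterms a)"

text \<open>Flattening of a sum/difference tree into the multiset of its signed summands
(True = added, False = subtracted). Two expressions have the same flattening iff
they differ only by reordering/rebracketing the additions (associativity and
commutativity of addition).\<close>

fun flat :: "sexp \<Rightarrow> (bool \<times> sexp) multiset" where
  "flat (Plus a b) = flat a + flat b"
| "flat (Minus a b) = flat a + image_mset (\<lambda>(s, t). (\<not> s, t)) (flat b)"
| "flat e = {#(True, e)#}"

text \<open>Lf i j is the symbolic expression by which the algorithm computes L(i,j)
(0-based indices, j \<le> i < n). It must follow the defining formulas, with the
sums possibly reordered by associativity/commutativity of addition.\<close>

definition chol_form :: "nat \<Rightarrow> (nat \<Rightarrow> nat \<Rightarrow> sexp) \<Rightarrow> bool" where
  "chol_form n Lf \<longleftrightarrow>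
     (\<forall>i<n. \<exists>s. Lf i i = Sqroot s \<and>
        flat s = {#(True, Var i i)#} +
                 image_mset (\<lambda>k. (False, Times (Lf i k) (Lf i k))) (mset [0..<i])) \<and>
     (\<forall>i<n. \<forall>j<i. \<exists>s ps. Lf i j = Divide s (Lf j j) \<and>
        (\<forall>k<j. ps k \<in> {Times (Lf i k) (Lf j k), Times (Lf j k) (Lf i k)}) \<and>
        flat s = {#(True, Var i j)#} + image_mset (\<lambda>k. (False, ps k)) (mset [0..<j]))"

definition chol_ops :: "nat \<Rightarrow> (nat \<Rightarrow> nat \<Rightarrow> sexp) \<Rightarrow> sexp set" where
  "chol_ops n Lf = (\<Union>i<n. \<Union>j\<le>i. subterms (Lf i j)) - {e. is_var e}"

definition classical_chol :: "nat \<Rightarrow> sexp list \<Rightarrow> bool" where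
  "classical_chol n rs \<longleftrightarrow> (\<exists>Lf. chol_form n Lf \<and> distinct rs \<and> set rs = chol_ops n Lf)"

text \<open>Levels 1..d (1 fastest); level l has word positions 0..<M l.
A state maps level and position to the stored value (None = empty).\<close>

type_synonym state = "nat \<Rightarrow> nat \<Rightarrow> sexp option"

datatype opc = OAdd | OSub | OMul | ODiv | OSqrt

fun apply_op :: "opc \<Rightarrow> sexp \<Rightarrow> sexp \<Rightarrow> sexp" where
  "apply_op OAdd a b = Plus a b"
| "apply_op OSub a b = Minus a b"
| "apply_op OMul a b = Times a b"
| "apply_op ODiv a b = Divide a b"
| "apply_op OSqrt a b = Sqroot a"

text \<open>Instructions:
  Xfer st l a b w : message of w contiguous words between level l and level l+1;
    if st (store) from positions a..<a+w of level l to positions b..<b+w of level l+1,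
    otherwise (fetch) from positions a..<a+w of level l+1 to b..<b+w of level l.
  Op f x y z : arithmetic in the fastest level 1: position x := f(pos y, pos z)
    (z is ignored for OSqrt).\<close>

datatype instr = Xfer bool nat nat nat nat | Op opc nat nat nat

fun step :: "nat \<Rightarrow> (nat \<Rightarrow> nat) \<Rightarrow> state \<Rightarrow> instr \<Rightarrow> state option" where
  "step d M \<sigma> (Xfer st l a b w) =
     (let src = (if st then l else l + 1); dst = (if st then l + 1 else l) in
      if 1 \<le> l \<and> l < d \<and> a + w \<le> M src \<and> b + w \<le> M dst \<and> (\<forall>t<w. \<sigma> src (a + t) \<noteq> None)
      then Some (\<sigma>(dst := (\<lambda>p. if b \<le> p \<and> p < b + w then \<sigma> src (a + (p - b)) else \<sigma> dst p)))
      else None)"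
| "step d M \<sigma> (Op f x y z) =
     (if 1 \<le> d \<and> x < M 1 \<and> y < M 1 \<and> z < M 1 \<and> \<sigma> 1 y \<noteq> None \<and> (f = OSqrt \<or> \<sigma> 1 z \<noteq> None)
      then Some (\<sigma>(1 := (\<sigma> 1)(x := Some (apply_op f (the (\<sigma> 1 y)) (the (\<sigma> 1 z))))))
      else None)"

fun op_result :: "state \<Rightarrow> instr \<Rightarrow> sexp list" where
  "op_result \<sigma> (Op f x y z) = [apply_op f (the (\<sigma> 1 y)) (the (\<sigma> 1 z))]"
| "op_result \<sigma> (Xfer _ _ _ _ _) = []"

fun run :: "nat \<Rightarrow> (nat \<Rightarrow> nat) \<Rightarrow> state \<Rightarrow> instr list \<Rightarrow> (state \<times> sexp list) option" where
  "run d M \<sigma> [] = Some (\<sigma>, [])"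
| "run d M \<sigma> (c # cs) =
     (case step d M \<sigma> c of
        None \<Rightarrow> None
      | Some \<sigma>' \<Rightarrow> (case run d M \<sigma>' cs of
                     None \<Rightarrow> None
                   | Some (\<tau>, rs) \<Rightarrow> Some (\<tau>, op_result \<sigma> c @ rs)))"

definition init_state :: "nat \<Rightarrow> (nat \<Rightarrow> nat) \<Rightarrow> nat \<Rightarrow> state \<Rightarrow> bool" where
  "init_state d M n \<sigma> \<longleftrightarrow>
     (\<forall>l. l \<noteq> d \<longrightarrow> (\<forall>p. \<sigma> l p = None)) \<and>
     (\<forall>p. \<sigma> d p \<noteq> None \<longrightarrow> p < M d \<and> (\<exists>i j. j \<le> i \<and> i < n \<and> \<sigma> d p = Some (Var i j))) \<and>
     (\<forall>i<n. \<forall>j\<le>i. \<exists>p<M d. \<sigma> d p = Some (Var i j))"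

definition classical_cholesky_alg :: "nat \<Rightarrow> (nat \<Rightarrow> nat) \<Rightarrow> nat \<Rightarrow> state \<Rightarrow> instr list \<Rightarrow> bool" where
  "classical_cholesky_alg d M n \<sigma>0 prog \<longleftrightarrow>
     init_state d M n \<sigma>0 \<and>
     (\<exists>\<tau> rs. run d M \<sigma>0 prog = Some (\<tau>, rs) \<and> classical_chol n rs)"

fun bw_instr :: "(nat \<Rightarrow> real) \<Rightarrow> instr \<Rightarrow> real" where
  "bw_instr \<beta> (Xfer _ l _ _ w) = \<beta> l * real w"
| "bw_instr \<beta> (Op _ _ _ _) = 0"

fun lat_instr :: "(nat \<Rightarrow> real) \<Rightarrow> instr \<Rightarrow> real" where
  "lat_instr \<alpha> (Xfer _ l _ _ _) = \<alpha> l"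
| "lat_instr \<alpha> (Op _ _ _ _) = 0"

definition bandwidth_cost :: "(nat \<Rightarrow> real) \<Rightarrow> instr list \<Rightarrow> real" where
  "bandwidth_cost \<beta> prog = sum_list (map (bw_instr \<beta>) prog)"

definition latency_cost :: "(nat \<Rightarrow> real) \<Rightarrow> instr list \<Rightarrow> real" where
  "latency_cost \<alpha> prog = sum_list (map (lat_instr \<alpha>) prog)"

end

theory Submission
  imports Defs
begin


fun snodes :: "sexp \<Rightarrow> sexp set" where
  "snodes (Plus a b) = insert (Plus a b) (snodes a \<union> snodes b)"
| "snodes (Minus a b) = insert (Minus a b) (snodes a \<union> snodes b)"
| "snodes e = {e}"

definition leaves :: "sexp \<Rightarrow> sexp set" where "leaves s = snd ` set_mset (flat s)"

fun children :: "sexp \<Rightarrow> sexp set" where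
  "children (Var i j) = {}"
| "children (Plus a b) = {a,b}"
| "children (Minus a b) = {a,b}"
| "children (Times a b) = {a,b}"
| "children (Divide a b) = {a,b}"
| "children (Sqroot a) = {a}"

fun isPM :: "sexp \<Rightarrow> bool" where
  "isPM (Plus _ _) = True" | "isPM (Minus _ _) = True" | "isPM _ = False"

fun isTimes :: "sexp \<Rightarrow> bool" where
  "isTimes (Times _ _) = True" | "isTimes _ = False"

lemma leaves_Plus[simp]: "leaves (Plus a b) = leaves a \<union> leaves b"
  by (auto simp: leaves_def)
lemma leaves_Minus[simp]: "leaves (Minus a b) = leaves a \<union> leaves b"
  by (force simp: leaves_def image_iff)
lemma leaves_nonPM: "\<not> isPM e \<Longrightarrow> leaves e = {e}"
  by (cases e) (auto simp: leaves_def)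

lemma snodes_leaves: "x \<in> snodes s \<Longrightarrow> leaves x \<subseteq> leaves s"
  by (induction s) auto
lemma snodes_nonPM_leaf: "x \<in> snodes s \<Longrightarrow> \<not> isPM x \<Longrightarrow> x \<in> leaves s"
  by (induction s) (auto simp: leaves_nonPM)
lemma leaves_snodes: "leaves s \<subseteq> snodes s"
  by (induction s) (auto simp: leaves_nonPM)
lemma self_subterms: "e \<in> subterms e"
  by (cases e) auto
lemma snodes_subterms: "snodes s \<subseteq> subterms s"
  by (induction s) (auto simp: self_subterms)
lemma self_snodes: "s \<in> snodes s"
  by (cases s) auto
lemma snodes_parent: "x \<in> snodes s \<Longrightarrow> x \<noteq> s \<Longrightarrow> \<exists>y\<in>snodes s. isPM y \<and> x \<in> children y"
  by (induction s) (auto simp: self_snodes)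
lemma snodes_child: "y \<in> snodes s \<Longrightarrow> isPM y \<Longrightarrow> c \<in> children y \<Longrightarrow> c \<in> snodes s"
  by (induction s) (auto simp: self_snodes elim: isPM.elims)
lemma leaves_PM_child: "isPM y \<Longrightarrow> v \<in> leaves y \<Longrightarrow> \<exists>c \<in> children y. v \<in> leaves c"
  by (cases y) auto
lemma leaves_nonempty: "leaves x \<noteq> {}"
  by (induction x) (auto simp: leaves_def)
lemma size_children: "c \<in> children y \<Longrightarrow> size c < size y"
  by (cases y) auto
lemma finite_snodes: "finite (snodes s)"
  by (induction s) auto
lemma snodes_cases: "x \<in> snodes s \<Longrightarrow> isPM x \<or> x \<in> leaves s"
  using snodes_nonPM_leaf by blast

definition sarg :: "sexp \<Rightarrow> sexp" where
  "sarg e = (case e of Sqroot s \<Rightarrow> s | Divide s _ \<Rightarrow> s | _ \<Rightarrow> e)"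


locale chol = fixes n :: nat and Lf :: "nat \<Rightarrow> nat \<Rightarrow> sexp"
  assumes cf: "chol_form n Lf"
begin

definition s :: "nat \<Rightarrow> nat \<Rightarrow> sexp" where "s i j = sarg (Lf i j)"

lemma L_diag: "i < n \<Longrightarrow> Lf i i = Sqroot (s i i) \<and>
   flat (s i i) = {#(True, Var i i)#} + image_mset (\<lambda>k. (False, Times (Lf i k) (Lf i k))) (mset [0..<i])"
  using cf unfolding chol_form_def s_def sarg_def by force

lemma L_off: "j < i \<Longrightarrow> i < n \<Longrightarrow> Lf i j = Divide (s i j) (Lf j j) \<and> (\<exists>ps.
        (\<forall>k<j. ps k \<in> {Times (Lf i k) (Lf j k), Times (Lf j k) (Lf i k)}) \<and>
        flat (s i j) = {#(True, Var i j)#} + image_mset (\<lambda>k. (False, ps k)) (mset [0..<j]))"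
proof -
  assume a: "j < i" "i < n"
  then obtain s' ps where "Lf i j = Divide s' (Lf j j)" "(\<forall>k<j. ps k \<in> {Times (Lf i k) (Lf j k), Times (Lf j k) (Lf i k)})"
     "flat s' = {#(True, Var i j)#} + image_mset (\<lambda>k. (False, ps k)) (mset [0..<j])"
    using cf unfolding chol_form_def by blast
  then show ?thesis unfolding s_def sarg_def by auto
qed

lemma Var_leaf: "j \<le> i \<Longrightarrow> i < n \<Longrightarrow> Var i j \<in> leaves (s i j)"
proof (cases "j = i")
  case True
  assume "i < n" then show ?thesis using L_diag True by (force simp: leaves_def)
next
  case False
  assume "j \<le> i" "i < n"
  then show ?thesis using L_off[of j i] False by (force simp: leaves_def)
qed

lemma leaves_s: "j \<le> i \<Longrightarrow> i < n \<Longrightarrow> x \<in> leaves (s i j) \<Longrightarrow>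
   x = Var i j \<or> (\<exists>k<j. x = Times (Lf i k) (Lf j k) \<or> x = Times (Lf j k) (Lf i k))"
proof (cases "j = i")
  case True
  assume "i < n" "x \<in> leaves (s i j)" then show ?thesis using L_diag[of i] True by (auto simp: leaves_def)
next
  case False
  assume a: "j \<le> i" "i < n" "x \<in> leaves (s i j)"
  obtain ps where ps: "(\<forall>k<j. ps k \<in> {Times (Lf i k) (Lf j k), Times (Lf j k) (Lf i k)})"
        "flat (s i j) = {#(True, Var i j)#} + image_mset (\<lambda>k. (False, ps k)) (mset [0..<j])"
    using L_off[of j i] a False by auto
  have "x = Var i j \<or> (\<exists>k<j. x = ps k)" using a(3) ps(2) by (auto simp: leaves_def)
  then show ?thesis using ps(1) by blast
qed

lemma s_shape: "j \<le> i \<Longrightarrow> i < n \<Longrightarrow> isPM (s i j) \<or> s i j = Var i j"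
  using Var_leaf leaves_nonPM by fastforce

lemma Lf_shape: "j \<le> i \<Longrightarrow> i < n \<Longrightarrow> Lf i j = Sqroot (s i j) \<or> Lf i j = Divide (s i j) (Lf j j)"
  using L_diag L_off by (cases "j = i") auto

lemma Lf_inj: "j \<le> i \<Longrightarrow> i < n \<Longrightarrow> j' \<le> i' \<Longrightarrow> i' < n \<Longrightarrow> Lf i j = Lf i' j' \<Longrightarrow> i = i' \<and> j = j'"
proof -
  assume a: "j \<le> i" "i < n" "j' \<le> i'" "i' < n" "Lf i j = Lf i' j'"
  have "s i j = s i' j'" using a(5) unfolding s_def by simp
  then have "Var i j \<in> leaves (s i' j')" using Var_leaf a by metis
  then show ?thesis using leaves_s[OF a(3,4)] by auto
qed

definition prod :: "nat \<Rightarrow> nat \<Rightarrow> nat \<Rightarrow> sexp" where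
  "prod i j k = (if Times (Lf i k) (Lf j k) \<in> leaves (s i j) then Times (Lf i k) (Lf j k) else Times (Lf j k) (Lf i k))"

lemma prod_leaf: "k < j \<Longrightarrow> j < i \<Longrightarrow> i < n \<Longrightarrow> prod i j k \<in> leaves (s i j)"
proof -
  assume a: "k < j" "j < i" "i < n"
  obtain ps where ps: "(\<forall>k<j. ps k \<in> {Times (Lf i k) (Lf j k), Times (Lf j k) (Lf i k)})"
        "flat (s i j) = {#(True, Var i j)#} + image_mset (\<lambda>k. (False, ps k)) (mset [0..<j])"
    using L_off[of j i] a by blast
  have "ps k \<in> leaves (s i j)" using ps(2) a(1) by (force simp: leaves_def)
  then show ?thesis using ps(1) a(1) unfolding prod_def by auto
qed

lemma prod_children: "children (prod i j k) = {Lf i k, Lf j k}"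
  unfolding prod_def by auto

definition Pt :: "nat \<Rightarrow> nat \<Rightarrow> sexp set" where
  "Pt i j = insert (Lf i j) {x \<in> snodes (s i j). \<not> isTimes x}"

lemma Times_eq: "j \<le> i \<Longrightarrow> i < n \<Longrightarrow> j' \<le> i' \<Longrightarrow> i' < n \<Longrightarrow> k < j \<Longrightarrow> k' < j' \<Longrightarrow>
   Times (Lf a k) (Lf b k) = Times (Lf a' k') (Lf b' k') \<Longrightarrow> {a,b} = {i,j} \<Longrightarrow> {a',b'} = {i',j'} \<Longrightarrow> i = i' \<and> j = j'"
proof -
  assume a: "j \<le> i" "i < n" "j' \<le> i'" "i' < n" "k < j" "k' < j'"
    "Times (Lf a k) (Lf b k) = Times (Lf a' k') (Lf b' k')" "{a,b} = {i,j}" "{a',b'} = {i',j'}"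
  have r: "a \<in> {i,j}" "b \<in> {i,j}" "a' \<in> {i',j'}" "b' \<in> {i',j'}" using a(8,9) by auto
  have "k \<le> a" "a < n" "k \<le> b" "b < n" "k' \<le> a'" "a' < n" "k' \<le> b'" "b' < n" using r a by auto
  then have "a = a'" "b = b'" using Lf_inj a(7) by auto
  then have "{i,j} = {i',j'}" using a(8,9) by simp
  then show ?thesis using a(1,3) by (metis doubleton_eq_iff le_antisym)
qed

lemma leaf_in_two: "j \<le> i \<Longrightarrow> i < n \<Longrightarrow> j' \<le> i' \<Longrightarrow> i' < n \<Longrightarrow> x \<in> leaves (s i j) \<Longrightarrow> x \<in> leaves (s i' j') \<Longrightarrow> i = i' \<and> j = j'"
proof -
  assume a: "j \<le> i" "i < n" "j' \<le> i'" "i' < n" "x \<in> leaves (s i j)" "x \<in> leaves (s i' j')"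
  from leaves_s[OF a(1,2,5)] leaves_s[OF a(3,4,6)] show ?thesis
  proof (elim disjE exE conjE)
    fix k k' assume "k < j" "k' < j'" "x = Times (Lf i k) (Lf j k)" "x = Times (Lf i' k') (Lf j' k')"
    then show ?thesis using Times_eq[OF a(1-4), of k k' i j i' j'] by auto
  next
    fix k k' assume "k < j" "k' < j'" "x = Times (Lf j k) (Lf i k)" "x = Times (Lf i' k') (Lf j' k')"
    then show ?thesis using Times_eq[OF a(1-4), of k k' j i i' j'] by auto
  next
    fix k k' assume "k < j" "k' < j'" "x = Times (Lf i k) (Lf j k)" "x = Times (Lf j' k') (Lf i' k')"
    then show ?thesis using Times_eq[OF a(1-4), of k k' i j j' i'] by auto
  next
    fix k k' assume "k < j" "k' < j'" "x = Times (Lf j k) (Lf i k)" "x = Times (Lf j' k') (Lf i' k')"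
    then show ?thesis using Times_eq[OF a(1-4), of k k' j i j' i'] by auto
  qed auto
qed

lemma Lf_not_snodes: "j \<le> i \<Longrightarrow> i < n \<Longrightarrow> j' \<le> i' \<Longrightarrow> i' < n \<Longrightarrow> Lf i' j' \<notin> snodes (s i j)"
proof
  assume b: "j \<le> i" "i < n" "j' \<le> i'" "i' < n" "Lf i' j' \<in> snodes (s i j)"
  have "isPM (Lf i' j') \<or> Lf i' j' \<in> leaves (s i j)" using snodes_cases b(5) .
  moreover have "\<not> isPM (Lf i' j')" using Lf_shape[OF b(3,4)] by auto
  ultimately have "Lf i' j' \<in> leaves (s i j)" by simp
  from leaves_s[OF b(1,2) this] show False using Lf_shape[OF b(3,4)] by auto
qed

lemma Pt_disj: "j \<le> i \<Longrightarrow> i < n \<Longrightarrow> j' \<le> i' \<Longrightarrow> i' < n \<Longrightarrow> x \<in> Pt i j \<Longrightarrow> x \<in> Pt i' j' \<Longrightarrow> i = i' \<and> j = j'"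
proof -
  assume a: "j \<le> i" "i < n" "j' \<le> i'" "i' < n" "x \<in> Pt i j" "x \<in> Pt i' j'"
  show ?thesis
  proof (cases "x = Lf i j")
    case True
    then show ?thesis using a Lf_inj Lf_not_snodes unfolding Pt_def by blast
  next
    case False
    then have x: "x \<in> snodes (s i j)" using a(5) unfolding Pt_def by auto
    show ?thesis
    proof (cases "x = Lf i' j'")
      case True then show ?thesis using x Lf_not_snodes a by blast
    next
      case False
      then have x': "x \<in> snodes (s i' j')" using a(6) unfolding Pt_def by auto
      obtain l where "l \<in> leaves x" using leaves_nonempty by blast
      then have "l \<in> leaves (s i j)" "l \<in> leaves (s i' j')" using snodes_leaves x x' by blast+
      then show ?thesis using leaf_in_two a by blast
    qed
  qed
qed

lemma prod_inj: "k < j \<Longrightarrow> j < i \<Longrightarrow> i < n \<Longrightarrow> k' < j' \<Longrightarrow> j' < i' \<Longrightarrow> i' < n \<Longrightarrow>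
  prod i j k = prod i' j' k' \<Longrightarrow> i = i' \<and> j = j' \<and> k = k'"
proof -
  assume a: "k < j" "j < i" "i < n" "k' < j'" "j' < i'" "i' < n" "prod i j k = prod i' j' k'"
  have "prod i j k \<in> leaves (s i j)" "prod i' j' k' \<in> leaves (s i' j')" using prod_leaf a by blast+
  then have ij: "i = i' \<and> j = j'" using leaf_in_two[of j i j' i'] a(2,3,5,6,7) by auto
  have "Lf i k = Lf i k' \<or> Lf i k = Lf j k'" using a(7) ij unfolding prod_def by (auto split: if_splits)
  moreover have "Lf i k = Lf i k' \<Longrightarrow> k = k'" using Lf_inj[of k i k' i] a ij by auto
  moreover have "Lf i k = Lf j k' \<Longrightarrow> k = k'" using Lf_inj[of k i k' j] a ij by auto
  ultimately show ?thesis using ij by blast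
qed

end

context chol begin
lemma Lf_Pt: "Lf i j \<in> Pt i j" unfolding Pt_def by simp

lemma finite_Pt: "finite (Pt i j)" unfolding Pt_def using finite_snodes by auto

lemma s_children: "j \<le> i \<Longrightarrow> i < n \<Longrightarrow> s i j \<in> children (Lf i j)"
  using Lf_shape[of j i] by auto

lemma s_Pt: "j \<le> i \<Longrightarrow> i < n \<Longrightarrow> s i j \<in> Pt i j"
proof -
  assume a: "j \<le> i" "i < n"
  have "\<not> isTimes (s i j)" using s_shape[OF a] by (cases "s i j") auto
  then show ?thesis using self_snodes unfolding Pt_def by blast
qed

lemma Pt_parent: "j \<le> i \<Longrightarrow> i < n \<Longrightarrow> x \<in> Pt i j \<Longrightarrow> x \<noteq> Lf i j \<Longrightarrow> \<exists>y \<in> Pt i j. x \<in> children y"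
proof -
  assume a: "j \<le> i" "i < n" "x \<in> Pt i j" "x \<noteq> Lf i j"
  then have x: "x \<in> snodes (s i j)" unfolding Pt_def by auto
  show ?thesis
  proof (cases "x = s i j")
    case True then show ?thesis using s_children[OF a(1,2)] Lf_Pt by blast
  next
    case False
    then obtain y where y: "y \<in> snodes (s i j)" "isPM y" "x \<in> children y" using snodes_parent x by blast
    have "\<not> isTimes y" using y(2) by (cases y) auto
    then show ?thesis using y unfolding Pt_def by blast
  qed
qed

lemma leaf_parent: "j \<le> i \<Longrightarrow> i < n \<Longrightarrow> x \<in> leaves (s i j) \<Longrightarrow> \<exists>y \<in> Pt i j. x \<in> children y"
proof -
  assume a: "j \<le> i" "i < n" "x \<in> leaves (s i j)"
  then have x: "x \<in> snodes (s i j)" using leaves_snodes by blast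
  show ?thesis
  proof (cases "x = s i j")
    case True then show ?thesis using s_children[OF a(1,2)] Lf_Pt by blast
  next
    case False
    then obtain y where y: "y \<in> snodes (s i j)" "isPM y" "x \<in> children y" using snodes_parent x by blast
    have "\<not> isTimes y" using y(2) by (cases y) auto
    then show ?thesis using y unfolding Pt_def by blast
  qed
qed

definition sp :: "nat \<Rightarrow> nat \<Rightarrow> sexp \<Rightarrow> bool" where
  "sp i j y \<longleftrightarrow> y = Lf i j \<or> Var i j \<in> leaves y"

lemma sp_child: "j \<le> i \<Longrightarrow> i < n \<Longrightarrow> y \<in> Pt i j \<Longrightarrow> sp i j y \<Longrightarrow> y \<noteq> Var i j \<Longrightarrow>
   \<exists>c \<in> children y. c \<in> Pt i j \<and> sp i j c"
proof -
  assume a: "j \<le> i" "i < n" "y \<in> Pt i j" "sp i j y" "y \<noteq> Var i j"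
  show ?thesis
  proof (cases "y = Lf i j")
    case True then show ?thesis using s_children[OF a(1,2)] s_Pt[OF a(1,2)] Var_leaf[OF a(1,2)]
      unfolding sp_def by blast
  next
    case False
    then have y: "y \<in> snodes (s i j)" "Var i j \<in> leaves y" using a(3,4) unfolding Pt_def sp_def by auto
    have "isPM y" using y(2) a(5) leaves_nonPM by fastforce
    then obtain c where c: "c \<in> children y" "Var i j \<in> leaves c" using leaves_PM_child y(2) by blast
    have "c \<in> snodes (s i j)" using snodes_child y(1) \<open>isPM y\<close> c(1) .
    moreover have "\<not> isTimes c" using c(2) leaves_nonPM by (cases c) auto
    ultimately show ?thesis using c unfolding Pt_def sp_def by auto
  qed
qed

lemma sub_Lf: "j \<le> i \<Longrightarrow> i < n \<Longrightarrow> snodes (s i j) \<subseteq> subterms (Lf i j)"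
proof -
  assume a: "j \<le> i" "i < n"
  have "subterms (s i j) \<subseteq> subterms (Lf i j)" using Lf_shape[OF a] by auto
  then show ?thesis using snodes_subterms by blast
qed

lemma Pt_ops: "j \<le> i \<Longrightarrow> i < n \<Longrightarrow> x \<in> Pt i j \<Longrightarrow> \<not> is_var x \<Longrightarrow> x \<in> chol_ops n Lf"
proof -
  assume a: "j \<le> i" "i < n" "x \<in> Pt i j" "\<not> is_var x"
  have "x \<in> subterms (Lf i j)" using a(3) sub_Lf[OF a(1,2)] self_subterms unfolding Pt_def by blast
  then show ?thesis unfolding chol_ops_def using a by blast
qed

lemma prod_ops: "k < j \<Longrightarrow> j < i \<Longrightarrow> i < n \<Longrightarrow> prod i j k \<in> chol_ops n Lf"
proof -
  assume a: "k < j" "j < i" "i < n"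
  have "prod i j k \<in> subterms (Lf i j)" using prod_leaf[OF a] leaves_snodes sub_Lf[of j i] a by auto
  moreover have "\<not> is_var (prod i j k)" unfolding prod_def by auto
  moreover have "i \<in> {..<n}" "j \<in> {..i}" using a by auto
  ultimately show ?thesis unfolding chol_ops_def by blast
qed

lemma Pt_var: "j \<le> i \<Longrightarrow> i < n \<Longrightarrow> x \<in> Pt i j \<Longrightarrow> is_var x \<Longrightarrow> x = Var i j"
proof -
  assume a: "j \<le> i" "i < n" "x \<in> Pt i j" "is_var x"
  have "x \<noteq> Lf i j" using Lf_shape[OF a(1,2)] a(4) by auto
  then have "x \<in> snodes (s i j)" using a(3) unfolding Pt_def by auto
  then have "x \<in> leaves (s i j)" using snodes_nonPM_leaf a(4) by (cases x) auto
  from leaves_s[OF a(1,2) this] show ?thesis using a(4) by auto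
qed

lemma Var_Pt: "j \<le> i \<Longrightarrow> i < n \<Longrightarrow> Var i j \<in> Pt i j"
  using Var_leaf leaves_snodes unfolding Pt_def by auto

lemma prod_parent: "k < j \<Longrightarrow> j < i \<Longrightarrow> i < n \<Longrightarrow> \<exists>y \<in> Pt i j. prod i j k \<in> children y"
  using prod_leaf leaf_parent by simp

end


definition fastb :: "nat \<Rightarrow> state \<Rightarrow> sexp set" where "fastb b \<sigma> = {v. \<exists>l p. l \<le> b \<and> \<sigma> l p = Some v}"
definition slowb :: "nat \<Rightarrow> state \<Rightarrow> sexp set" where "slowb b \<sigma> = {v. \<exists>l p. b < l \<and> \<sigma> l p = Some v}"
definition valsS :: "state \<Rightarrow> sexp set" where "valsS \<sigma> = {v. \<exists>l p. \<sigma> l p = Some v}"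
definition rdb :: "nat \<Rightarrow> state \<Rightarrow> instr \<Rightarrow> sexp set" where
  "rdb b \<sigma> c = (case c of Xfer st l a _ w \<Rightarrow> if \<not> st \<and> l = b then {v. \<exists>q<w. \<sigma> (b+1) (a+q) = Some v} else {} | Op _ _ _ _ \<Rightarrow> {})"
definition wrb :: "nat \<Rightarrow> state \<Rightarrow> instr \<Rightarrow> sexp set" where
  "wrb b \<sigma> c = (case c of Xfer st l a _ w \<Rightarrow> if st \<and> l = b then {v. \<exists>q<w. \<sigma> b (a+q) = Some v} else {} | Op _ _ _ _ \<Rightarrow> {})"
definition wlev :: "nat \<Rightarrow> instr \<Rightarrow> nat" where
  "wlev b c = (case c of Xfer _ l _ _ w \<Rightarrow> if l = b then w else 0 | Op _ _ _ _ \<Rightarrow> 0)"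
definition xlev :: "nat \<Rightarrow> instr \<Rightarrow> nat" where
  "xlev b c = (case c of Xfer _ l _ _ _ \<Rightarrow> if l = b then 1 else 0 | Op _ _ _ _ \<Rightarrow> 0)"

lemma fast_slow: "valsS \<sigma> = fastb b \<sigma> \<union> slowb b \<sigma>"
  unfolding valsS_def fastb_def slowb_def by (auto, metis not_less)

lemma Xfer_cases: "step d M \<sigma> (Xfer st l a b' w) = Some \<sigma>' \<Longrightarrow> \<sigma>' l' p = Some v \<Longrightarrow>
   \<sigma> l' p = Some v \<or> (st \<and> l' = l+1 \<and> (\<exists>q<w. \<sigma> l (a+q) = Some v)) \<or> (\<not>st \<and> l' = l \<and> (\<exists>q<w. \<sigma> (l+1) (a+q) = Some v))"
  by (auto simp: Let_def split: if_splits) (rule_tac x="p-b'" in exI, simp)+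

lemma Xfer_ok: "step d M \<sigma> (Xfer st l a b' w) = Some \<sigma>' \<Longrightarrow> 1 \<le> l \<and> l < d \<and> w \<le> M l \<and> w \<le> M (l+1)"
  by (auto simp: Let_def split: if_splits)

lemma Op_ok: "step d M \<sigma> (Op f x y z) = Some \<sigma>' \<Longrightarrow> 1 \<le> d \<and> 1 \<le> M 1 \<and> \<sigma>' = \<sigma>(1 := (\<sigma> 1)(x := Some (apply_op f (the (\<sigma> 1 y)) (the (\<sigma> 1 z))))) \<and>
   \<sigma> 1 y \<noteq> None \<and> (f = OSqrt \<or> \<sigma> 1 z \<noteq> None)"
  by (auto split: if_splits)

lemma Op_cases: "step d M \<sigma> (Op f x y z) = Some \<sigma>' \<Longrightarrow> \<sigma>' l p = Some v \<Longrightarrow>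
   \<sigma> l p = Some v \<or> (l = 1 \<and> v \<in> set (op_result \<sigma> (Op f x y z)))"
  by (auto split: if_splits)

lemma step_vals: "step d M \<sigma> c = Some \<sigma>' \<Longrightarrow> valsS \<sigma>' \<subseteq> valsS \<sigma> \<union> set (op_result \<sigma> c)"
proof (cases c)
  case (Xfer st l a b' w)
  assume s: "step d M \<sigma> c = Some \<sigma>'"
  show ?thesis unfolding valsS_def using Xfer_cases[OF s[unfolded Xfer]] by blast
next
  case (Op f x y z)
  assume "step d M \<sigma> c = Some \<sigma>'"
  then show ?thesis using Op_cases unfolding valsS_def Op by blast
qed

lemma step_fast: "1 \<le> b \<Longrightarrow> step d M \<sigma> c = Some \<sigma>' \<Longrightarrow> fastb b \<sigma>' \<subseteq> fastb b \<sigma> \<union> rdb b \<sigma> c \<union> set (op_result \<sigma> c)"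
proof (cases c)
  case (Xfer st l a b' w)
  assume b: "1 \<le> b" and s: "step d M \<sigma> c = Some \<sigma>'"
  show ?thesis
  proof
    fix v assume "v \<in> fastb b \<sigma>'"
    then obtain l' p where lp: "l' \<le> b" "\<sigma>' l' p = Some v" unfolding fastb_def by auto
    from Xfer_cases[OF s[unfolded Xfer] lp(2)] lp(1)
    show "v \<in> fastb b \<sigma> \<union> rdb b \<sigma> c \<union> set (op_result \<sigma> c)"
    proof (elim disjE conjE exE)
      assume "\<sigma> l' p = Some v" then show ?thesis unfolding fastb_def using lp(1) by blast
    next
      fix q assume "st" "l' = l + 1" "\<sigma> l (a + q) = Some v"
      then show ?thesis unfolding fastb_def using lp(1) by auto
    next
      fix q assume "\<not> st" "l' = l" "q < w" "\<sigma> (l+1) (a + q) = Some v"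
      note h = this
      show ?thesis
      proof (cases "l = b")
        case True
        then have "v \<in> rdb b \<sigma> c" unfolding rdb_def Xfer using h by auto
        then show ?thesis by blast
      next
        case False
        then have "l+1 \<le> b" using lp(1) h by auto
        then show ?thesis unfolding fastb_def using h by blast
      qed
    qed
  qed
next
  case (Op f x y z)
  assume "1 \<le> b" "step d M \<sigma> c = Some \<sigma>'"
  then show ?thesis using Op_cases[of d M \<sigma> f x y z \<sigma>'] unfolding fastb_def Op by fastforce
qed

lemma step_slow: "1 \<le> b \<Longrightarrow> step d M \<sigma> c = Some \<sigma>' \<Longrightarrow> slowb b \<sigma>' \<subseteq> slowb b \<sigma> \<union> wrb b \<sigma> c"
proof (cases c)
  case (Xfer st l a b' w)
  assume b: "1 \<le> b" and s: "step d M \<sigma> c = Some \<sigma>'"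
  show ?thesis
  proof
    fix v assume "v \<in> slowb b \<sigma>'"
    then obtain l' p where lp: "b < l'" "\<sigma>' l' p = Some v" unfolding slowb_def by auto
    from Xfer_cases[OF s[unfolded Xfer] lp(2)] lp(1)
    show "v \<in> slowb b \<sigma> \<union> wrb b \<sigma> c"
    proof (elim disjE conjE exE)
      assume "\<sigma> l' p = Some v" then show ?thesis unfolding slowb_def using lp(1) by blast
    next
      fix q assume "st" "l' = l + 1" "q < w" "\<sigma> l (a + q) = Some v"
      note h = this
      show ?thesis
      proof (cases "l = b")
        case True
        then have "v \<in> wrb b \<sigma> c" unfolding wrb_def Xfer using h by auto
        then show ?thesis by blast
      next
        case False
        then have "b < l" using lp(1) h by auto
        then show ?thesis unfolding slowb_def using h by blast
      qed
    next
      fix q assume h: "\<not> st" "l' = l" "\<sigma> (l+1) (a + q) = Some v"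
      then have "b < l+1" using lp(1) by simp
      then show ?thesis unfolding slowb_def using h by blast
    qed
  qed
next
  case (Op f x y z)
  assume "1 \<le> b" "step d M \<sigma> c = Some \<sigma>'"
  then show ?thesis using Op_cases[of d M \<sigma> f x y z \<sigma>'] unfolding slowb_def Op by fastforce
qed

lemma step_bnd: "step d M \<sigma> c = Some \<sigma>' \<Longrightarrow> (\<forall>l p. \<sigma> l p \<noteq> None \<longrightarrow> 1 \<le> l \<and> p < M l) \<Longrightarrow>
   (\<forall>l p. \<sigma>' l p \<noteq> None \<longrightarrow> 1 \<le> l \<and> p < M l)"
proof (cases c)
  case (Xfer st l a b' w)
  assume "step d M \<sigma> c = Some \<sigma>'" "(\<forall>l p. \<sigma> l p \<noteq> None \<longrightarrow> 1 \<le> l \<and> p < M l)"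
  then show ?thesis using Xfer by (auto simp: Let_def split: if_splits; blast)
next
  case (Op f x y z)
  assume "step d M \<sigma> c = Some \<sigma>'" "(\<forall>l p. \<sigma> l p \<noteq> None \<longrightarrow> 1 \<le> l \<and> p < M l)"
  then show ?thesis using Op by (auto split: if_splits; blast)
qed

lemma step_children: "step d M \<sigma> c = Some \<sigma>' \<Longrightarrow> r \<in> set (op_result \<sigma> c) \<Longrightarrow> x \<in> children r \<Longrightarrow> \<exists>p. \<sigma> 1 p = Some x"
proof (cases c)
  case (Op f x' y z)
  assume a: "step d M \<sigma> c = Some \<sigma>'" "r \<in> set (op_result \<sigma> c)" "x \<in> children r"
  then show ?thesis using Op_ok[OF a(1)[unfolded Op]] Op by (cases f) auto
qed auto

lemma op_nonvar: "r \<in> set (op_result \<sigma> c) \<Longrightarrow> \<not> is_var r"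
proof (cases c)
  case (Op f x' y z)
  assume "r \<in> set (op_result \<sigma> c)"
  then show ?thesis using Op by (cases f) auto
qed auto

lemma card_rdb: "finite (rdb b \<sigma> c) \<and> card (rdb b \<sigma> c) \<le> wlev b c"
proof (cases c)
  case (Xfer st l a b' w)
  have "{v. \<exists>q<w. \<sigma> (b+1) (a+q) = Some v} \<subseteq> (\<lambda>q. the (\<sigma> (b+1) (a+q))) ` {..<w}" by force
  then have "finite {v. \<exists>q<w. \<sigma> (b+1) (a+q) = Some v} \<and> card {v. \<exists>q<w. \<sigma> (b+1) (a+q) = Some v} \<le> w"
    by (metis (no_types, lifting) card_image_le card_lessThan finite_imageI finite_lessThan finite_subset card_mono le_trans)
  then show ?thesis using Xfer unfolding rdb_def wlev_def by auto
qed (auto simp: rdb_def)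

lemma card_wrb: "finite (wrb b \<sigma> c) \<and> card (wrb b \<sigma> c) \<le> wlev b c"
proof (cases c)
  case (Xfer st l a b' w)
  have "{v. \<exists>q<w. \<sigma> b (a+q) = Some v} \<subseteq> (\<lambda>q. the (\<sigma> b (a+q))) ` {..<w}" by force
  then have "finite {v. \<exists>q<w. \<sigma> b (a+q) = Some v} \<and> card {v. \<exists>q<w. \<sigma> b (a+q) = Some v} \<le> w"
    by (metis (no_types, lifting) card_image_le card_lessThan finite_imageI finite_lessThan finite_subset card_mono le_trans)
  then show ?thesis using Xfer unfolding wrb_def wlev_def by auto
qed (auto simp: wrb_def)

lemma wlev_le: assumes "step d M \<sigma> c = Some \<sigma>'" shows "wlev b c \<le> M b"
proof (cases c)
  case (Xfer st l a b' w)
  have "w \<le> M l" using Xfer_ok[of d M \<sigma> st l a b' w \<sigma>'] assms Xfer by blast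
  then show ?thesis using Xfer by (auto simp add: wlev_def)
qed (simp add: wlev_def)

lemma xlev_wlev: assumes "step d M \<sigma> c = Some \<sigma>'" shows "real (wlev b c) \<le> real (M b) * real (xlev b c)"
proof (cases c)
  case (Xfer st l a b' w)
  have "w \<le> M l" using Xfer_ok[of d M \<sigma> st l a b' w \<sigma>'] assms Xfer by blast
  then show ?thesis using Xfer by (auto simp add: wlev_def xlev_def)
qed (simp add: wlev_def xlev_def)

lemma rdb_sub: "rdb b \<sigma> c \<subseteq> slowb b \<sigma>"
  unfolding rdb_def slowb_def by (cases c) auto


lemma run_trace: "run d M \<sigma> prog = Some (\<tau>, rs) \<Longrightarrow> \<exists>S. S 0 = \<sigma> \<and>
   (\<forall>t<length prog. step d M (S t) (prog!t) = Some (S (Suc t))) \<and>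
   rs = concat (map (\<lambda>t. op_result (S t) (prog!t)) [0..<length prog])"
proof (induction prog arbitrary: \<sigma> \<tau> rs)
  case Nil then show ?case by auto
next
  case (Cons c cs)
  from Cons.prems obtain \<sigma>' rs' where s: "step d M \<sigma> c = Some \<sigma>'" "run d M \<sigma>' cs = Some (\<tau>, rs')"
    "rs = op_result \<sigma> c @ rs'"
    by (auto split: option.splits)
  from Cons.IH[OF s(2)] obtain S' where S': "S' 0 = \<sigma>'" "\<forall>t<length cs. step d M (S' t) (cs!t) = Some (S' (Suc t))"
    "rs' = concat (map (\<lambda>t. op_result (S' t) (cs!t)) [0..<length cs])" by blast
  define S where "S = (\<lambda>t. case t of 0 \<Rightarrow> \<sigma> | Suc t' \<Rightarrow> S' t')"
  have "\<forall>t<length (c#cs). step d M (S t) ((c#cs)!t) = Some (S (Suc t))"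
  proof (intro allI impI)
    fix t assume "t < length (c#cs)"
    then show "step d M (S t) ((c#cs)!t) = Some (S (Suc t))" using s(1) S' unfolding S_def
      by (cases t) auto
  qed
  moreover have "rs = concat (map (\<lambda>t. op_result (S t) ((c#cs)!t)) [0..<length (c#cs)])"
  proof -
    have "[0..<length (c#cs)] = 0 # map Suc [0..<length cs]"
      by (simp add: map_Suc_upt upt_conv_Cons del: upt_Suc)
    then show ?thesis using s(3) S'(3) unfolding S_def by (simp add: comp_def)
  qed
  moreover have "S 0 = \<sigma>" unfolding S_def by simp
  ultimately show ?case by blast
qed

lemma distinct_concat_upt: "distinct (concat (map f [0..<m])) \<Longrightarrow> t < t' \<Longrightarrow> t' < m \<Longrightarrow> set (f t) \<inter> set (f t') = {}"
proof (induction m)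
  case 0 then show ?case by simp
next
  case (Suc m)
  show ?case
  proof (cases "t' = m")
    case True
    have "set (f t) \<subseteq> set (concat (map f [0..<m]))" using Suc.prems True by auto
    then show ?thesis using Suc.prems(1) True by auto
  next
    case False then show ?thesis using Suc by auto
  qed
qed


locale mach = chol n Lf for n Lf +
  fixes d :: nat and M :: "nat \<Rightarrow> nat" and prog :: "instr list" and S :: "nat \<Rightarrow> state" and b :: nat
  assumes init: "init_state d M n (S 0)"
  and steps: "\<forall>t<length prog. step d M (S t) (prog!t) = Some (S (Suc t))"
  and dist: "distinct (concat (map (\<lambda>t. op_result (S t) (prog!t)) [0..<length prog]))"
  and ops: "set (concat (map (\<lambda>t. op_result (S t) (prog!t)) [0..<length prog])) = chol_ops n Lf"
  and bb: "1 \<le> b" "b < d"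
begin

abbreviation len where "len \<equiv> length prog"
definition res :: "nat \<Rightarrow> sexp list" where "res t = op_result (S t) (prog!t)"
definition comp :: "nat \<Rightarrow> nat \<Rightarrow> sexp set" where "comp a e = (\<Union>t\<in>{a..<e}. set (res t))"
definition rdset :: "nat \<Rightarrow> nat \<Rightarrow> sexp set" where "rdset a e = (\<Union>t\<in>{a..<e}. rdb b (S t) (prog!t))"
definition wrset :: "nat \<Rightarrow> nat \<Rightarrow> sexp set" where "wrset a e = (\<Union>t\<in>{a..<e}. wrb b (S t) (prog!t))"
definition wsum :: "nat \<Rightarrow> nat \<Rightarrow> nat" where "wsum a e = (\<Sum>t\<in>{a..<e}. wlev b (prog!t))"
definition F :: nat where "F = (\<Sum>l\<in>{1..b}. M l)"
definition In :: "nat \<Rightarrow> nat \<Rightarrow> sexp set" where "In a e = fastb b (S a) \<union> rdset a e"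
definition Out :: "nat \<Rightarrow> nat \<Rightarrow> sexp set" where "Out a e = fastb b (S e) \<union> wrset a e"

lemma stp: "t < len \<Longrightarrow> step d M (S t) (prog!t) = Some (S (Suc t))" using steps by blast

lemma bnd: "t \<le> len \<Longrightarrow> \<forall>l p. S t l p \<noteq> None \<longrightarrow> 1 \<le> l \<and> p < M l"
proof (induction t)
  case 0
  have "1 \<le> d" using bb by simp
  then show ?case using init unfolding init_state_def by (metis le_less_linear less_one)
next
  case (Suc t)
  then have "t < len" by simp
  have h: "\<forall>l p. S t l p \<noteq> None \<longrightarrow> 1 \<le> l \<and> p < M l" using Suc by simp
  show ?case using step_bnd[OF stp[OF \<open>t < len\<close>] h] by blast
qed

lemma fast_card: "t \<le> len \<Longrightarrow> finite (fastb b (S t)) \<and> card (fastb b (S t)) \<le> F"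
proof -
  assume t: "t \<le> len"
  let ?A = "SIGMA l:{1..b}. {..<M l}"
  have "fastb b (S t) \<subseteq> (\<lambda>(l,p). the (S t l p)) ` ?A"
  proof
    fix v assume "v \<in> fastb b (S t)"
    then obtain l p where lp: "l \<le> b" "S t l p = Some v" unfolding fastb_def by auto
    then have "1 \<le> l" "p < M l" using bnd[OF t] by auto
    then show "v \<in> (\<lambda>(l,p). the (S t l p)) ` ?A" using lp by force
  qed
  moreover have fA: "finite ?A" by auto
  moreover have "card ?A = F" unfolding F_def by simp
  ultimately have f: "finite ((\<lambda>(l,p). the (S t l p)) ` ?A)" "fastb b (S t) \<subseteq> (\<lambda>(l,p). the (S t l p)) ` ?A"
     "card ((\<lambda>(l,p). the (S t l p)) ` ?A) \<le> F" using card_image_le[OF fA, of "\<lambda>(l,p). the (S t l p)"] by auto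
  then have "card (fastb b (S t)) \<le> F" using card_mono[OF f(1,2)] by linarith
  moreover have "finite (fastb b (S t))" using finite_subset[OF f(2) f(1)] .
  ultimately show ?thesis by simp
qed

lemma fast0: "fastb b (S 0) = {}"
  using init bb unfolding init_state_def fastb_def by auto

lemma vals0: "valsS (S 0) \<subseteq> {v. is_var v}"
proof
  fix v assume "v \<in> valsS (S 0)"
  then obtain l p where lp: "S 0 l p = Some v" unfolding valsS_def by auto
  then have "l = d" using init unfolding init_state_def by (metis option.distinct(1))
  then obtain i j where "S 0 d p = Some (Var i j)" using init lp unfolding init_state_def by blast
  then show "v \<in> {v. is_var v}" using lp \<open>l = d\<close> by auto
qed

lemma fast_mono: "a \<le> e \<Longrightarrow> e \<le> len \<Longrightarrow> fastb b (S e) \<subseteq> fastb b (S a) \<union> rdset a e \<union> comp a e"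
proof (induction e)
  case 0 then show ?case by auto
next
  case (Suc e)
  show ?case
  proof (cases "a = Suc e")
    case True then show ?thesis by auto
  next
    case False
    then have "a \<le> e" "e < len" using Suc.prems by auto
    have "fastb b (S (Suc e)) \<subseteq> fastb b (S e) \<union> rdb b (S e) (prog!e) \<union> set (res e)"
      using step_fast[OF bb(1) stp[OF \<open>e < len\<close>]] unfolding res_def .
    moreover have "rdset a e \<union> rdb b (S e) (prog!e) = rdset a (Suc e)"
      unfolding rdset_def using \<open>a \<le> e\<close> by (auto simp: atLeastLessThanSuc)
    moreover have "comp a e \<union> set (res e) = comp a (Suc e)"
      unfolding comp_def using \<open>a \<le> e\<close> by (auto simp: atLeastLessThanSuc)
    ultimately show ?thesis using Suc.IH \<open>a \<le> e\<close> \<open>e < len\<close> by auto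
  qed
qed

lemma slow_mono: "a \<le> e \<Longrightarrow> e \<le> len \<Longrightarrow> slowb b (S e) \<subseteq> slowb b (S a) \<union> wrset a e"
proof (induction e)
  case 0 then show ?case by auto
next
  case (Suc e)
  show ?case
  proof (cases "a = Suc e")
    case True then show ?thesis by auto
  next
    case False
    then have "a \<le> e" "e < len" using Suc.prems by auto
    have "slowb b (S (Suc e)) \<subseteq> slowb b (S e) \<union> wrb b (S e) (prog!e)"
      using step_slow[OF bb(1) stp[OF \<open>e < len\<close>]] .
    moreover have "wrset a e \<union> wrb b (S e) (prog!e) = wrset a (Suc e)"
      unfolding wrset_def using \<open>a \<le> e\<close> by (auto simp: atLeastLessThanSuc)
    ultimately show ?thesis using Suc.IH \<open>a \<le> e\<close> \<open>e < len\<close> by auto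
  qed
qed

lemma vals_mono: "a \<le> e \<Longrightarrow> e \<le> len \<Longrightarrow> valsS (S e) \<subseteq> valsS (S a) \<union> comp a e"
proof (induction e)
  case 0 then show ?case by auto
next
  case (Suc e)
  show ?case
  proof (cases "a = Suc e")
    case True then show ?thesis by auto
  next
    case False
    then have "a \<le> e" "e < len" using Suc.prems by auto
    have "valsS (S (Suc e)) \<subseteq> valsS (S e) \<union> set (res e)"
      using step_vals[OF stp[OF \<open>e < len\<close>]] unfolding res_def .
    moreover have "comp a e \<union> set (res e) = comp a (Suc e)"
      unfolding comp_def using \<open>a \<le> e\<close> by (auto simp: atLeastLessThanSuc)
    ultimately show ?thesis using Suc.IH \<open>a \<le> e\<close> \<open>e < len\<close> by auto
  qed
qed

lemma uniq: "t < len \<Longrightarrow> t' < len \<Longrightarrow> r \<in> set (res t) \<Longrightarrow> r \<in> set (res t') \<Longrightarrow> t = t'"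
proof (rule ccontr)
  assume a: "t < len" "t' < len" "r \<in> set (res t)" "r \<in> set (res t')" "t \<noteq> t'"
  show False
  proof (cases "t < t'")
    case True then show False using distinct_concat_upt[OF dist, of t t'] a unfolding res_def by blast
  next
    case False then have "t' < t" using a(5) by simp
    then show False using distinct_concat_upt[OF dist, of t' t] a unfolding res_def by blast
  qed
qed

lemma mem_ops: "r \<in> chol_ops n Lf \<Longrightarrow> \<exists>t<len. r \<in> set (res t)"
proof -
  assume "r \<in> chol_ops n Lf"
  then have "r \<in> (\<Union>x\<in>{0..<len}. set (op_result (S x) (prog!x)))" using ops by simp
  then show ?thesis unfolding res_def by auto
qed

lemma res_nonvar: "r \<in> set (res t) \<Longrightarrow> \<not> is_var r"
  using op_nonvar unfolding res_def by blast

lemma prior: "t \<le> len \<Longrightarrow> x \<in> valsS (S t) \<Longrightarrow> \<not> is_var x \<Longrightarrow> \<exists>u<t. x \<in> set (res u)"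
proof -
  assume a: "t \<le> len" "x \<in> valsS (S t)" "\<not> is_var x"
  then have "x \<in> (\<Union>u\<in>{0..<t}. set (res u))" using vals_mono[of 0 t] vals0 unfolding comp_def by blast
  then show ?thesis by auto
qed

lemma operand: "t < len \<Longrightarrow> r \<in> set (res t) \<Longrightarrow> x \<in> children r \<Longrightarrow> x \<in> fastb b (S t)"
  using step_children[OF stp] bb unfolding res_def fastb_def by blast

lemma operand_vals: "t < len \<Longrightarrow> r \<in> set (res t) \<Longrightarrow> x \<in> children r \<Longrightarrow> x \<in> valsS (S t)"
  using operand fast_slow by blast

lemma enter: "a \<le> t \<Longrightarrow> t < e \<Longrightarrow> e \<le> len \<Longrightarrow> x \<in> fastb b (S t) \<Longrightarrow> x \<notin> comp a e \<Longrightarrow> x \<in> In a e"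
proof -
  assume a: "a \<le> t" "t < e" "e \<le> len" "x \<in> fastb b (S t)" "x \<notin> comp a e"
  have "x \<in> fastb b (S a) \<union> rdset a t \<union> comp a t" using fast_mono[of a t] a by auto
  moreover have "rdset a t \<subseteq> rdset a e" unfolding rdset_def using a by (intro SUP_subset_mono) auto
  moreover have "comp a t \<subseteq> comp a e" unfolding comp_def using a by (intro SUP_subset_mono) auto
  ultimately show ?thesis using a(5) unfolding In_def by auto
qed

lemma escape: "a \<le> u \<Longrightarrow> u < e \<Longrightarrow> e \<le> t' \<Longrightarrow> t' \<le> len \<Longrightarrow> x \<in> set (res u) \<Longrightarrow> x \<in> valsS (S t') \<Longrightarrow> x \<in> Out a e"
proof -
  assume a: "a \<le> u" "u < e" "e \<le> t'" "t' \<le> len" "x \<in> set (res u)" "x \<in> valsS (S t')"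
  have "x \<notin> comp e t'"
  proof
    assume "x \<in> comp e t'"
    then obtain v where "v \<in> {e..<t'}" "x \<in> set (res v)" unfolding comp_def by auto
    then show False using uniq[of u v x] a by auto
  qed
  then have "x \<in> valsS (S e)" using vals_mono[of e t'] a by auto
  then have "x \<in> fastb b (S e) \<or> x \<in> slowb b (S e)" using fast_slow by blast
  moreover have "x \<notin> slowb b (S a)"
  proof
    assume "x \<in> slowb b (S a)"
    then have "x \<in> valsS (S a)" using fast_slow by blast
    then obtain u' where "u' < a" "x \<in> set (res u')" using prior[of a x] res_nonvar a by auto
    then show False using uniq[of u' u x] a by auto
  qed
  moreover have "slowb b (S e) \<subseteq> slowb b (S a) \<union> wrset a e" using slow_mono[of a e] a by simp
  ultimately show ?thesis unfolding Out_def by blast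
qed

end


context mach begin

definition A :: "nat \<Rightarrow> nat \<Rightarrow> (nat \<times> nat) set" where
  "A a e = {(i,j). j \<le> i \<and> i < n \<and> (\<exists>z\<in>Pt i j. z \<in> In a e \<union> Out a e)}"

lemma comp_time: "y \<in> comp a e \<Longrightarrow> \<exists>t. a \<le> t \<and> t < e \<and> y \<in> set (res t)"
  unfolding comp_def by auto

lemma children_nonvar: "c \<in> children y \<Longrightarrow> \<not> is_var y"
  by (cases y) auto

lemma active: "a \<le> e \<Longrightarrow> e \<le> len \<Longrightarrow> j \<le> i \<Longrightarrow> i < n \<Longrightarrow> x \<in> Pt i j \<Longrightarrow> x \<in> comp a e \<Longrightarrow> (i,j) \<in> A a e"
proof -
  assume a: "a \<le> e" "e \<le> len" "j \<le> i" "i < n" "x \<in> Pt i j" "x \<in> comp a e"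
  define C where "C = {y \<in> Pt i j. y \<in> comp a e}"
  have fC: "finite C" "C \<noteq> {}" unfolding C_def using finite_Pt a(5,6) by auto
  have "Max (size ` C) \<in> size ` C" using fC by (intro Max_in) auto
  then obtain z where z: "z \<in> C" "size z = Max (size ` C)" by auto
  have zmax: "\<And>y. y \<in> C \<Longrightarrow> size y \<le> size z" using z(2) fC by simp
  have zPt: "z \<in> Pt i j" "z \<in> comp a e" using z(1) unfolding C_def by auto
  obtain tz where tz: "a \<le> tz" "tz < e" "z \<in> set (res tz)" using comp_time[OF zPt(2)] by blast
  show ?thesis
  proof (cases "z = Lf i j")
    case False
    obtain y where y: "y \<in> Pt i j" "z \<in> children y" using Pt_parent[OF a(3,4) zPt(1) False] by blast
    have "size z < size y" using size_children[OF y(2)] .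
    then have yC: "y \<notin> C" using zmax by fastforce
    have "y \<in> chol_ops n Lf" using Pt_ops[OF a(3,4) y(1)] children_nonvar[OF y(2)] by blast
    then obtain ty where ty: "ty < len" "y \<in> set (res ty)" using mem_ops by blast
    have zv: "z \<in> valsS (S ty)" using operand_vals[OF ty y(2)] .
    obtain u where u: "u < ty" "z \<in> set (res u)" using prior[OF _ zv res_nonvar[OF tz(3)]] ty(1) by auto
    have "u = tz" using uniq[OF _ _ u(2) tz(3)] u(1) ty(1) tz(2) a(2) by auto
    have "ty \<ge> e"
    proof (rule ccontr)
      assume "\<not> e \<le> ty"
      then have "y \<in> comp a e" unfolding comp_def using u(1) \<open>u = tz\<close> tz(1) ty(2) by auto
      then show False using yC y(1) unfolding C_def by auto
    qed
    then have "z \<in> Out a e" using escape[OF tz(1,2) _ _ tz(3) zv] ty(1) by auto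
    then show ?thesis unfolding A_def using a(3,4) zPt(1) by auto
  next
    case True
    define D where "D = {y \<in> C. sp i j y}"
    have fD: "finite D" "D \<noteq> {}" unfolding D_def sp_def using fC z(1) True by auto
    have "Min (size ` D) \<in> size ` D" using fD by (intro Min_in) auto
    then obtain y0 where y0: "y0 \<in> D" "size y0 = Min (size ` D)" by auto
    have ymin: "\<And>y. y \<in> D \<Longrightarrow> size y0 \<le> size y" using y0(2) fD by simp
    have y0P: "y0 \<in> Pt i j" "y0 \<in> comp a e" "sp i j y0" using y0(1) unfolding D_def C_def by auto
    obtain t0 where t0: "a \<le> t0" "t0 < e" "y0 \<in> set (res t0)" using comp_time[OF y0P(2)] by blast
    have "y0 \<noteq> Var i j" using res_nonvar[OF t0(3)] by auto
    then obtain c where c: "c \<in> children y0" "c \<in> Pt i j" "sp i j c" using sp_child[OF a(3,4) y0P(1,3)] by blast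
    have "size c < size y0" using size_children[OF c(1)] .
    then have "c \<notin> D" using ymin by fastforce
    then have "c \<notin> comp a e" using c unfolding D_def C_def by auto
    moreover have "c \<in> fastb b (S t0)" using operand[OF _ t0(3) c(1)] t0(2) a(2) by auto
    ultimately have "c \<in> In a e" using enter[OF t0(1,2) a(2)] by blast
    then show ?thesis unfolding A_def using a(3,4) c(2) by auto
  qed
qed

lemma in_A: "j \<le> i \<Longrightarrow> i < n \<Longrightarrow> z \<in> Pt i j \<Longrightarrow> z \<in> In a e \<Longrightarrow> (i,j) \<in> A a e"
  unfolding A_def by auto

lemma L_A: "a \<le> t \<Longrightarrow> t < e \<Longrightarrow> e \<le> len \<Longrightarrow> k \<le> i \<Longrightarrow> i < n \<Longrightarrow> Lf i k \<in> fastb b (S t) \<Longrightarrow> (i,k) \<in> A a e"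
proof -
  assume a: "a \<le> t" "t < e" "e \<le> len" "k \<le> i" "i < n" "Lf i k \<in> fastb b (S t)"
  show ?thesis
  proof (cases "Lf i k \<in> comp a e")
    case True then show ?thesis using active[OF _ a(3,4,5) Lf_Pt] a by auto
  next
    case False then show ?thesis using enter[OF a(1,2,3,6)] in_A[OF a(4,5) Lf_Pt] by blast
  qed
qed

lemma triple: "a \<le> e \<Longrightarrow> e \<le> len \<Longrightarrow> k < j \<Longrightarrow> j < i \<Longrightarrow> i < n \<Longrightarrow> prod i j k \<in> comp a e \<Longrightarrow>
  (i,k) \<in> A a e \<and> (j,k) \<in> A a e \<and> ((i,j) \<in> A a e \<or> prod i j k \<in> Out a e)"
proof -
  assume a: "a \<le> e" "e \<le> len" "k < j" "j < i" "i < n" "prod i j k \<in> comp a e"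
  obtain t where t: "a \<le> t" "t < e" "prod i j k \<in> set (res t)" using comp_time[OF a(6)] by blast
  have tl: "t < len" using t(2) a(2) by simp
  have "Lf i k \<in> fastb b (S t)" "Lf j k \<in> fastb b (S t)" using operand[OF tl t(3)] prod_children by auto
  then have 1: "(i,k) \<in> A a e" "(j,k) \<in> A a e" using L_A[OF t(1,2) a(2)] a by auto
  obtain y where y: "y \<in> Pt i j" "prod i j k \<in> children y" using prod_parent[OF a(3,4,5)] by blast
  have "y \<in> chol_ops n Lf" using Pt_ops[OF _ a(5) y(1)] children_nonvar[OF y(2)] a(4) by auto
  then obtain ty where ty: "ty < len" "y \<in> set (res ty)" using mem_ops by blast
  have pv: "prod i j k \<in> valsS (S ty)" using operand_vals[OF ty y(2)] .
  obtain u where u: "u < ty" "prod i j k \<in> set (res u)" using prior[OF _ pv res_nonvar[OF t(3)]] ty(1) by auto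
  have "u = t" using uniq[OF _ tl u(2) t(3)] u(1) ty(1) by auto
  have "(i,j) \<in> A a e \<or> prod i j k \<in> Out a e"
  proof (cases "ty < e")
    case True
    then have "y \<in> comp a e" unfolding comp_def using u(1) \<open>u = t\<close> t(1) ty(2) by auto
    then show ?thesis using active[OF a(1,2) _ a(5) y(1)] a(4) by auto
  next
    case False
    then show ?thesis using escape[OF t(1,2) _ _ t(3) pv] ty(1) by auto
  qed
  then show ?thesis using 1 by blast
qed

lemma card_In: "a \<le> e \<Longrightarrow> e \<le> len \<Longrightarrow> finite (In a e) \<and> card (In a e) \<le> F + wsum a e"
proof -
  assume a: "a \<le> e" "e \<le> len"
  have f1: "finite (fastb b (S a))" "card (fastb b (S a)) \<le> F" using fast_card a by auto
  have f2: "finite (rdset a e)" unfolding rdset_def using card_rdb by auto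
  have "card (rdset a e) \<le> (\<Sum>t\<in>{a..<e}. card (rdb b (S t) (prog!t)))" unfolding rdset_def by (rule card_UN_le) simp
  also have "\<dots> \<le> wsum a e" unfolding wsum_def by (rule sum_mono) (use card_rdb in auto)
  finally have "card (In a e) \<le> F + wsum a e" unfolding In_def using card_Un_le[of "fastb b (S a)" "rdset a e"] f1 by linarith
  then show ?thesis unfolding In_def using f1 f2 by auto
qed

lemma card_Out: "a \<le> e \<Longrightarrow> e \<le> len \<Longrightarrow> finite (Out a e) \<and> card (Out a e) \<le> F + wsum a e"
proof -
  assume a: "a \<le> e" "e \<le> len"
  have f1: "finite (fastb b (S e))" "card (fastb b (S e)) \<le> F" using fast_card a by auto
  have f2: "finite (wrset a e)" unfolding wrset_def using card_wrb by auto
  have "card (wrset a e) \<le> (\<Sum>t\<in>{a..<e}. card (wrb b (S t) (prog!t)))" unfolding wrset_def by (rule card_UN_le) simp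
  also have "\<dots> \<le> wsum a e" unfolding wsum_def by (rule sum_mono) (use card_wrb in auto)
  finally have "card (Out a e) \<le> F + wsum a e" unfolding Out_def using card_Un_le[of "fastb b (S e)" "wrset a e"] f1 by linarith
  then show ?thesis unfolding Out_def using f1 f2 by auto
qed

lemma card_A: "a \<le> e \<Longrightarrow> e \<le> len \<Longrightarrow> finite (A a e) \<and> card (A a e) \<le> 2 * F + 2 * wsum a e"
proof -
  assume a: "a \<le> e" "e \<le> len"
  let ?U = "In a e \<union> Out a e"
  have fU: "finite ?U" "card ?U \<le> 2 * F + 2 * wsum a e"
    using card_In[OF a] card_Out[OF a] card_Un_le[of "In a e" "Out a e"] by auto
  have fA: "finite (A a e)" by (rule finite_subset[of _ "{..<n} \<times> {..<n}"]) (auto simp: A_def)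
  define f where "f = (\<lambda>p. SOME z. z \<in> Pt (fst p) (snd p) \<and> z \<in> ?U)"
  have fp: "\<And>p. p \<in> A a e \<Longrightarrow> f p \<in> Pt (fst p) (snd p) \<and> f p \<in> ?U"
    unfolding f_def A_def by (rule someI_ex) auto
  have "inj_on f (A a e)"
  proof
    fix p q assume pq: "p \<in> A a e" "q \<in> A a e" "f p = f q"
    then show "p = q" using fp[OF pq(1)] fp[OF pq(2)] Pt_disj[of "snd p" "fst p" "snd q" "fst q"]
      unfolding A_def by (auto simp: prod_eq_iff)
  qed
  moreover have "f ` A a e \<subseteq> ?U" using fp by auto
  ultimately have "card (A a e) \<le> card ?U" using card_inj_on_le fU(1) by blast
  then show ?thesis using fA fU by linarith
qed

end


lemma triangles:
  fixes A :: "(nat \<times> nat) set" and s :: real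
  assumes fA: "finite A" and s: "s > 0"
  shows "real (card {(i,j,k). (i,j) \<in> A \<and> (i,k) \<in> A \<and> (j,k) \<in> A}) \<le> real (card A) * s + real (card A)^2 / s"
proof -
  define N where "N i = {k. (i,k) \<in> A}" for i
  define deg where "deg i = card (N i)" for i
  have fN: "finite (N i)" for i
  proof (rule finite_subset[of _ "snd ` A"])
    show "N i \<subseteq> snd ` A" unfolding N_def by (auto intro: image_eqI[where x="(i,_)"])
  qed (simp add: fA)
  define T1 where "T1 = {(i,j,k). (i,j) \<in> A \<and> (i,k) \<in> A \<and> real (deg i) \<le> s}"
  define H where "H = {i \<in> fst ` A. real (deg i) > s}"
  define T2 where "T2 = {(i,j,k). i \<in> H \<and> (j,k) \<in> A}"
  have sub: "{(i,j,k). (i,j) \<in> A \<and> (i,k) \<in> A \<and> (j,k) \<in> A} \<subseteq> T1 \<union> T2"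
  proof
    fix x assume "x \<in> {(i,j,k). (i,j) \<in> A \<and> (i,k) \<in> A \<and> (j,k) \<in> A}"
    then obtain i j k where x: "x = (i,j,k)" "(i,j) \<in> A" "(i,k) \<in> A" "(j,k) \<in> A" by auto
    have "i \<in> fst ` A" using x(2) by (auto intro: image_eqI[of _ _ "(i,j)"])
    then show "x \<in> T1 \<union> T2" unfolding T1_def T2_def H_def using x by (cases "real (deg i) \<le> s") auto
  qed
  let ?P = "{p \<in> A. real (deg (fst p)) \<le> s}"
  have T1s: "T1 \<subseteq> (\<lambda>(p,k). (fst p, snd p, k)) ` (SIGMA p:?P. N (fst p))"
  proof
    fix x assume "x \<in> T1"
    then obtain i j k where x: "x = (i,j,k)" "(i,j) \<in> A" "(i,k) \<in> A" "real (deg i) \<le> s" unfolding T1_def by auto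
    show "x \<in> (\<lambda>(p,k). (fst p, snd p, k)) ` (SIGMA p:?P. N (fst p))"
      by (rule image_eqI[of _ _ "((i,j),k)"]) (use x in \<open>auto simp: N_def\<close>)
  qed
  have fP: "finite ?P" using fA by auto
  have fS: "finite (SIGMA p:?P. N (fst p))" using fP fN by auto
  have "card T1 \<le> card ((\<lambda>(p,k). (fst p, snd p, k)) ` (SIGMA p:?P. N (fst p)))"
    by (rule card_mono) (use fS T1s in auto)
  also have "\<dots> \<le> card (SIGMA p:?P. N (fst p))" by (rule card_image_le[OF fS])
  also have "\<dots> = (\<Sum>p\<in>?P. card (N (fst p)))" by (rule card_SigmaI[OF fP]) (use fN in auto)
  also have "\<dots> = (\<Sum>p\<in>?P. deg (fst p))" unfolding deg_def ..
  finally have "card T1 \<le> (\<Sum>p\<in>?P. deg (fst p))" .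
  then have "real (card T1) \<le> real (\<Sum>p\<in>?P. deg (fst p))" by (simp only: of_nat_le_iff)
  also have "\<dots> = (\<Sum>p\<in>?P. real (deg (fst p)))" by (rule of_nat_sum)
  also have "\<dots> \<le> (\<Sum>p\<in>?P. s)" by (rule sum_mono) auto
  also have "\<dots> = real (card ?P) * s" by simp
  also have "\<dots> \<le> real (card A) * s" using s fA by (intro mult_right_mono) (auto intro: card_mono)
  finally have c1: "real (card T1) \<le> real (card A) * s" .
  have fH: "finite H" unfolding H_def using fA by auto
  have "(SIGMA i:H. N i) \<subseteq> A" unfolding N_def by auto
  then have "card (SIGMA i:H. N i) \<le> card A" using fA card_mono by blast
  moreover have "card (SIGMA i:H. N i) = (\<Sum>i\<in>H. card (N i))" by (rule card_SigmaI[OF fH]) (use fN in auto)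
  ultimately have "(\<Sum>i\<in>H. deg i) \<le> card A" unfolding deg_def by simp
  then have "real (\<Sum>i\<in>H. deg i) \<le> real (card A)" by (simp only: of_nat_le_iff)
  then have dH: "(\<Sum>i\<in>H. real (deg i)) \<le> real (card A)" by (simp only: of_nat_sum)
  have "real (card H) * s = (\<Sum>i\<in>H. s)" by simp
  also have "\<dots> \<le> (\<Sum>i\<in>H. real (deg i))" by (rule sum_mono) (auto simp: H_def)
  finally have hs: "real (card H) * s \<le> real (card A)" using dH by linarith
  have T2e: "T2 = (\<lambda>(i,p). (i, fst p, snd p)) ` (H \<times> A)"
  proof
    show "T2 \<subseteq> (\<lambda>(i,p). (i, fst p, snd p)) ` (H \<times> A)"
    proof
      fix x assume "x \<in> T2"
      then obtain i j k where x: "x = (i,j,k)" "i \<in> H" "(j,k) \<in> A" unfolding T2_def by auto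
      show "x \<in> (\<lambda>(i,p). (i, fst p, snd p)) ` (H \<times> A)"
        by (rule image_eqI[of _ _ "(i,(j,k))"]) (use x in auto)
    qed
  qed (auto simp: T2_def)
  then have "card T2 \<le> card (H \<times> A)" by (simp add: card_image_le fH fA)
  then have "card T2 \<le> card H * card A" by (simp add: card_cartesian_product)
  then have "real (card T2) \<le> real (card H * card A)" by (simp only: of_nat_le_iff)
  then have c2: "real (card T2) \<le> real (card H) * real (card A)" by (simp only: of_nat_mult)
  have "real (card H) \<le> real (card A) / s" using hs s by (simp add: field_simps)
  then have "real (card H) * real (card A) \<le> real (card A) / s * real (card A)" by (rule mult_right_mono) simp
  then have c2': "real (card T2) \<le> real (card A)^2 / s" using c2 by (simp add: power2_eq_square)
  have fT1: "finite T1" by (rule finite_subset[OF T1s]) (use fS in simp)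
  have fT2: "finite T2" using T2e fH fA by simp
  have "card {(i,j,k). (i,j) \<in> A \<and> (i,k) \<in> A \<and> (j,k) \<in> A} \<le> card (T1 \<union> T2)"
    by (rule card_mono) (use sub fT1 fT2 in auto)
  also have "\<dots> \<le> card T1 + card T2" by (rule card_Un_le)
  finally have "real (card {(i,j,k). (i,j) \<in> A \<and> (i,k) \<in> A \<and> (j,k) \<in> A}) \<le> real (card T1 + card T2)" by (simp only: of_nat_le_iff)
  then show ?thesis using c1 c2' by simp
qed


context mach begin

definition Tset :: "(nat \<times> nat \<times> nat) set" where "Tset = {(i,j,k). k < j \<and> j < i \<and> i < n}"

lemma F_pos: "0 < n \<Longrightarrow> 1 \<le> F"
proof -
  assume n: "0 < n"
  have "Lf 0 0 \<in> chol_ops n Lf" using Pt_ops[of 0 0] Lf_Pt n Lf_shape[of 0 0] by fastforce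
  then obtain t where t: "t < len" "Lf 0 0 \<in> set (res t)" using mem_ops by blast
  then obtain f x y z where "prog!t = Op f x y z" unfolding res_def by (cases "prog!t") auto
  then have "1 \<le> M 1" using Op_ok stp[OF t(1)] by metis
  moreover have "M 1 \<le> F" unfolding F_def using bb by (intro member_le_sum) auto
  ultimately show ?thesis by simp
qed

lemma Mb_le_F: "M b \<le> F" unfolding F_def using bb by (intro member_le_sum) auto

lemma wsum_split: "a \<le> e \<Longrightarrow> wsum 0 e = wsum 0 a + wsum a e"
  unfolding wsum_def by (metis sum.atLeastLessThan_concat zero_le)

lemma vars_read: "j \<le> i \<Longrightarrow> i < n \<Longrightarrow> Var i j \<in> rdset 0 len"
proof -
  assume a: "j \<le> i" "i < n"
  have "Var i j \<noteq> Lf i j" using Lf_shape[OF a] by auto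
  then obtain y where y: "y \<in> Pt i j" "Var i j \<in> children y" using Pt_parent[OF a Var_Pt[OF a]] by blast
  have "y \<in> chol_ops n Lf" using Pt_ops[OF a y(1)] children_nonvar[OF y(2)] by blast
  then obtain ty where ty: "ty < len" "y \<in> set (res ty)" using mem_ops by blast
  have "Var i j \<in> fastb b (S ty)" using operand[OF ty y(2)] .
  moreover have "Var i j \<notin> comp 0 len" using res_nonvar unfolding comp_def by fastforce
  ultimately have "Var i j \<in> In 0 len" using enter[of 0 ty len] ty(1) by simp
  then show ?thesis unfolding In_def using fast0 by simp
qed

lemma card_rdset: "card (rdset a e) \<le> wsum a e"
proof -
  have "card (rdset a e) \<le> (\<Sum>t\<in>{a..<e}. card (rdb b (S t) (prog!t)))" unfolding rdset_def by (rule card_UN_le) simp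
  also have "\<dots> \<le> wsum a e" unfolding wsum_def by (rule sum_mono) (use card_rdb in auto)
  finally show ?thesis .
qed

lemma W_vars: "real n ^ 2 / 2 \<le> real (wsum 0 len)"
proof -
  let ?P = "SIGMA i:{..<n}. {..i}"
  have inj: "inj_on (\<lambda>(i,j). Var i j) ?P" by (auto simp: inj_on_def)
  have sub: "(\<lambda>(i,j). Var i j) ` ?P \<subseteq> rdset 0 len" using vars_read by auto
  have "finite (rdset 0 len)" using card_In[of 0 len] unfolding In_def by auto
  then have "card ?P \<le> card (rdset 0 len)" using card_inj_on_le[OF inj sub] by blast
  also have "card (rdset 0 len) \<le> wsum 0 len" by (rule card_rdset)
  finally have c: "card ?P \<le> wsum 0 len" .
  have cP: "card ?P = (\<Sum>i<n. Suc i)" by simp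
  have g: "2 * (\<Sum>i<m. Suc i) = m * (m + 1)" for m by (induction m) auto
  have "real n ^ 2 \<le> real (n * (n+1))" by (simp add: power2_eq_square algebra_simps)
  also have "\<dots> = 2 * real (card ?P)" using g[of n] cP by (metis of_nat_mult of_nat_numeral)
  finally have h1: "real n ^ 2 \<le> 2 * real (card ?P)" .
  have "real (card ?P) \<le> real (wsum 0 len)" using c by (simp only: of_nat_le_iff)
  then show ?thesis using h1 by linarith
qed

definition g :: "nat \<Rightarrow> nat" where "g t = wsum 0 t div F"
definition aa :: "nat \<Rightarrow> nat" where "aa r = (LEAST t. len \<le> t \<or> r \<le> g t)"

lemma g_mono: "t \<le> t' \<Longrightarrow> g t \<le> g t'"
  unfolding g_def using wsum_split[of t t'] by (simp add: div_le_mono)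

lemma aa_le: "aa r \<le> len" unfolding aa_def by (rule Least_le) simp

lemma aa_below: "t < aa r \<Longrightarrow> t < len \<and> g t < r"
  unfolding aa_def using not_less_Least by fastforce

lemma aa_at: "aa r < len \<Longrightarrow> r \<le> g (aa r)"
proof -
  assume "aa r < len"
  have "len \<le> aa r \<or> r \<le> g (aa r)" unfolding aa_def by (rule LeastI[of _ len]) simp
  then show ?thesis using \<open>aa r < len\<close> by simp
qed

lemma in_seg: "t < len \<Longrightarrow> aa (g t) \<le> t \<and> t < aa (Suc (g t))"
proof
  assume t: "t < len"
  show "aa (g t) \<le> t"
  proof (rule ccontr)
    assume "\<not> aa (g t) \<le> t"
    then show False using aa_below[of t "g t"] by simp
  qed
  show "t < aa (Suc (g t))"
  proof (rule ccontr)
    assume "\<not> t < aa (Suc (g t))"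
    then have "aa (Suc (g t)) < len" using t by simp
    then have "Suc (g t) \<le> g (aa (Suc (g t)))" by (rule aa_at)
    moreover have "g (aa (Suc (g t))) \<le> g t" using g_mono \<open>\<not> t < aa (Suc (g t))\<close> by simp
    ultimately show False by simp
  qed
qed

lemma aa_mono: "aa r \<le> aa (Suc r)"
proof (rule ccontr)
  assume a: "\<not> aa r \<le> aa (Suc r)"
  then have "aa (Suc r) < len" using aa_le[of r] by simp
  then have "Suc r \<le> g (aa (Suc r))" by (rule aa_at)
  moreover have "g (aa (Suc r)) < r" using aa_below[of "aa (Suc r)" r] a by simp
  ultimately show False by simp
qed

lemma seg_w: "1 \<le> F \<Longrightarrow> wsum (aa r) (aa (Suc r)) \<le> 2 * F"
proof (cases "aa r = aa (Suc r)")
  case True then show ?thesis unfolding wsum_def by simp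
next
  case False
  assume F1: "1 \<le> F"
  then have lt: "aa r < aa (Suc r)" using aa_mono[of r] False by simp
  define t' where "t' = aa (Suc r) - 1"
  have t': "aa r \<le> t'" "t' < len" "Suc t' = aa (Suc r)" using lt aa_le[of "Suc r"] unfolding t'_def by auto
  have "g t' < Suc r" using aa_below[of t' "Suc r"] t' by simp
  then have gs: "wsum 0 t' div F \<le> r" unfolding g_def by simp
  have "wsum 0 t' = F * (wsum 0 t' div F) + wsum 0 t' mod F" by simp
  moreover have "wsum 0 t' mod F < F" using F1 by simp
  moreover have "F * (wsum 0 t' div F) \<le> F * r" using gs by simp
  ultimately have Y: "wsum 0 t' < F * r + F" by linarith
  have "r \<le> g (aa r)" using aa_at t' by simp
  then have "r \<le> wsum 0 (aa r) div F" unfolding g_def .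
  then have "F * r \<le> F * (wsum 0 (aa r) div F)" by simp
  also have "\<dots> \<le> wsum 0 (aa r)" by simp
  finally have X: "F * r \<le> wsum 0 (aa r)" .
  have w: "wlev b (prog!t') \<le> F" using wlev_le[OF stp[OF t'(2)], of b] Mb_le_F by simp
  have "wsum 0 (Suc t') = wsum 0 t' + wlev b (prog!t')" unfolding wsum_def by simp
  moreover have "wsum 0 (Suc t') = wsum 0 (aa r) + wsum (aa r) (Suc t')" using wsum_split t'(1) by simp
  ultimately have "wsum (aa r) (Suc t') \<le> 2 * F" using X Y w by linarith
  then show ?thesis using t'(3) by simp
qed

definition tseg :: "nat \<Rightarrow> (nat \<times> nat \<times> nat) set" where
  "tseg r = {\<tau> \<in> Tset. (case \<tau> of (i,j,k) \<Rightarrow> prod i j k) \<in> comp (aa r) (aa (Suc r))}"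

lemma finite_Tset: "finite Tset"
  by (rule finite_subset[of _ "{..<n} \<times> {..<n} \<times> {..<n}"]) (auto simp: Tset_def)

lemma sqrt_id: "0 < x \<Longrightarrow> x^2 / sqrt x = x * sqrt (x::real)"
proof -
  assume x: "0 < x"
  have "sqrt x * sqrt x = x" using x by simp
  then show ?thesis using x by (simp add: field_simps power2_eq_square)
qed

lemma tseg_bound: "1 \<le> F \<Longrightarrow> real (card (tseg r)) \<le> 45 * real F * sqrt (real F)"
proof -
  assume F1: "1 \<le> F"
  let ?e0 = "aa r" and ?e1 = "aa (Suc r)"
  have e: "?e0 \<le> ?e1" "?e1 \<le> len" using aa_mono aa_le by auto
  have w: "wsum ?e0 ?e1 \<le> 2 * F" using seg_w[OF F1] .
  let ?A = "A ?e0 ?e1"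
  have cA: "finite ?A" "card ?A \<le> 6 * F" using card_A[OF e] w by auto
  have cO: "finite (Out ?e0 ?e1)" "card (Out ?e0 ?e1) \<le> 3 * F" using card_Out[OF e] w by auto
  define Tri where "Tri = {(i,j,k). (i,j) \<in> ?A \<and> (i,k) \<in> ?A \<and> (j,k) \<in> ?A}"
  define Q where "Q = {\<tau> \<in> Tset. (case \<tau> of (i,j,k) \<Rightarrow> prod i j k) \<in> Out ?e0 ?e1}"
  have sub: "tseg r \<subseteq> Tri \<union> Q"
  proof
    fix \<tau> assume "\<tau> \<in> tseg r"
    then obtain i j k where t: "\<tau> = (i,j,k)" "k < j" "j < i" "i < n" "prod i j k \<in> comp ?e0 ?e1"
      unfolding tseg_def Tset_def by auto
    from triple[OF e t(2,3,4,5)] show "\<tau> \<in> Tri \<union> Q" unfolding Tri_def Q_def Tset_def using t by auto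
  qed
  have "inj_on (\<lambda>\<tau>. case \<tau> of (i,j,k) \<Rightarrow> prod i j k) Q"
  proof
    fix x y assume xy: "x \<in> Q" "y \<in> Q" "(case x of (i,j,k) \<Rightarrow> prod i j k) = (case y of (i,j,k) \<Rightarrow> prod i j k)"
    obtain i j k where x: "x = (i,j,k)" "k < j" "j < i" "i < n" using xy(1) unfolding Q_def Tset_def by auto
    obtain i' j' k' where y: "y = (i',j',k')" "k' < j'" "j' < i'" "i' < n" using xy(2) unfolding Q_def Tset_def by auto
    show "x = y" using prod_inj[OF x(2,3,4) y(2,3,4)] xy(3) x(1) y(1) by auto
  qed
  moreover have "(\<lambda>\<tau>. case \<tau> of (i,j,k) \<Rightarrow> prod i j k) ` Q \<subseteq> Out ?e0 ?e1" unfolding Q_def by auto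
  ultimately have cQ: "card Q \<le> 3 * F" using card_inj_on_le cO by (metis le_trans)
  have sF: "0 < sqrt (real F)" "1 \<le> sqrt (real F)" using F1 by auto
  have tri: "real (card Tri) \<le> real (card ?A) * sqrt (real F) + real (card ?A)^2 / sqrt (real F)"
    unfolding Tri_def by (rule triangles[OF cA(1) sF(1)])
  have m: "real (card ?A) \<le> 6 * real F" using cA(2) by linarith
  have "real (card ?A) * sqrt (real F) \<le> 6 * real F * sqrt (real F)" using m sF by (intro mult_right_mono) auto
  moreover have "real (card ?A)^2 \<le> (6 * real F)^2" using m by (intro power_mono) auto
  then have "real (card ?A)^2 / sqrt (real F) \<le> (6 * real F)^2 / sqrt (real F)" using sF by (intro divide_right_mono) auto
  moreover have "(6 * real F)^2 / sqrt (real F) = 36 * (real F * sqrt (real F))"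
    using sqrt_id[of "real F"] F1 by (simp add: power_mult_distrib)
  ultimately have ctri: "real (card Tri) \<le> 42 * real F * sqrt (real F)" using tri by linarith
  have fTri: "finite Tri" by (rule finite_subset[of _ "{..<n} \<times> {..<n} \<times> {..<n}"]) (auto simp: Tri_def A_def)
  have fQ: "finite Q" using finite_Tset unfolding Q_def by simp
  have "card (tseg r) \<le> card (Tri \<union> Q)" by (rule card_mono) (use sub fTri fQ in auto)
  also have "\<dots> \<le> card Tri + card Q" by (rule card_Un_le)
  finally have "real (card (tseg r)) \<le> real (card Tri) + real (card Q)" by linarith
  moreover have "real (card Q) \<le> 3 * real F" using cQ by linarith
  moreover have "3 * real F \<le> 3 * real F * sqrt (real F)" using sF F1 by simp
  ultimately show ?thesis using ctri by linarith
qed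

lemma cover: "Tset \<subseteq> (\<Union>r\<in>{..g len}. tseg r)"
proof
  fix \<tau> assume "\<tau> \<in> Tset"
  then obtain i j k where t: "\<tau> = (i,j,k)" "k < j" "j < i" "i < n" unfolding Tset_def by auto
  obtain t0 where t0: "t0 < len" "prod i j k \<in> set (res t0)" using mem_ops prod_ops[OF t(2,3,4)] by blast
  have "prod i j k \<in> comp (aa (g t0)) (aa (Suc (g t0)))" unfolding comp_def using in_seg[OF t0(1)] t0(2) by auto
  moreover have "g t0 \<le> g len" using g_mono t0(1) by simp
  ultimately show "\<tau> \<in> (\<Union>r\<in>{..g len}. tseg r)" unfolding tseg_def using \<open>\<tau> \<in> Tset\<close> t(1) by auto
qed

lemma main_count: "1 \<le> F \<Longrightarrow> real (card Tset) \<le> (real (wsum 0 len) / real F + 1) * (45 * real F * sqrt (real F))"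
proof -
  assume F1: "1 \<le> F"
  have "card Tset \<le> card (\<Union>r\<in>{..g len}. tseg r)"
    by (rule card_mono) (use cover finite_Tset in \<open>auto simp: tseg_def\<close>)
  also have "\<dots> \<le> (\<Sum>r\<in>{..g len}. card (tseg r))" by (rule card_UN_le) simp
  finally have "real (card Tset) \<le> (\<Sum>r\<in>{..g len}. real (card (tseg r)))" by (simp only: of_nat_le_iff of_nat_sum[symmetric])
  also have "\<dots> \<le> (\<Sum>r\<in>{..g len}. 45 * real F * sqrt (real F))" by (rule sum_mono) (use tseg_bound F1 in auto)
  also have "\<dots> = (real (g len) + 1) * (45 * real F * sqrt (real F))" by simp
  also have "\<dots> \<le> (real (wsum 0 len) / real F + 1) * (45 * real F * sqrt (real F))"
  proof (rule mult_right_mono)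
    have "g len * F \<le> wsum 0 len" unfolding g_def by simp
    then have "real (g len) * real F \<le> real (wsum 0 len)" by (simp only: of_nat_mult[symmetric] of_nat_le_iff)
    then have "real (g len) \<le> real (wsum 0 len) / real F" using F1 by (simp add: field_simps)
    then show "real (g len) + 1 \<le> real (wsum 0 len) / real F + 1" by simp
  qed (use F1 in auto)
  finally show ?thesis .
qed

lemma Tset_lower: "real (n div 3) ^ 3 \<le> real (card Tset)"
proof -
  let ?q = "n div 3"
  have sub: "{2*?q..<3*?q} \<times> {?q..<2*?q} \<times> {0..<?q} \<subseteq> Tset" unfolding Tset_def by auto
  have "card ({2*?q..<3*?q} \<times> {?q..<2*?q} \<times> {0..<?q}) = ?q * (?q * ?q)" by (simp add: card_cartesian_product)
  then have "?q * (?q * ?q) \<le> card Tset" using card_mono[OF finite_Tset sub] by simp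
  then have "real (?q * (?q * ?q)) \<le> real (card Tset)" by (simp only: of_nat_le_iff)
  then show ?thesis by (simp add: power3_eq_cube)
qed

end


lemma arith_main:
  fixes W F s n d :: real
  assumes d: "1 \<le> d" and s: "1 \<le> s" and F1: "1 \<le> F" and Fd: "F \<le> d * s^2" and n: "1 \<le> n"
  and Wv: "n^2 / 2 \<le> W"
  and Wt: "6 \<le> n \<Longrightarrow> (n/6)^3 \<le> (W / F + 1) * (45 * F * sqrt F)"
  shows "n^3 / s / (38880 * d * sqrt d) \<le> W"
proof -
  define c where "c = 1 / (38880 * d * sqrt d)"
  define a where "a = 1 / (9720 * sqrt d)"
  define Y where "Y = n^3 / s"
  have sd: "1 \<le> sqrt d" using d by simp
  have dsd: "1 \<le> d * sqrt d" using mult_mono[OF d sd] d by simp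
  have c0: "0 < c" unfolding c_def using dsd by simp
  have ca: "c = a / (4 * d)" unfolding c_def a_def by (simp add: field_simps)
  have s9: "1 \<le> 9720 * sqrt d" using sd by linarith
  have a1: "0 < a" "a \<le> 1" unfolding a_def using sd s9 by auto
  have "12 \<le> 38880 * (d * sqrt d)" using dsd by linarith
  then have c12: "c \<le> 1/12" unfolding c_def by (intro divide_left_mono) (auto simp: mult.assoc)
  have Y0: "0 \<le> Y" unfolding Y_def using n s by simp
  have goal: "c * Y \<le> W"
  proof (cases "6 \<le> n")
    case False
    have Yn: "Y = n^2 * (n / s)" unfolding Y_def by (simp add: power3_eq_cube power2_eq_square)
    have "n * 1 \<le> n * s" using s n by (intro mult_left_mono) auto
    then have "n / s \<le> n" using s by (simp add: divide_le_eq)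
    then have "n / s \<le> 6" using False by linarith
    then have "n^2 * (n / s) \<le> n^2 * 6" by (intro mult_left_mono) auto
    then have "Y \<le> n^2 * 6" using Yn by simp
    then have "c * Y \<le> c * (n^2 * 6)" using c0 by (intro mult_left_mono) auto
    also have "\<dots> \<le> 1/12 * (n^2 * 6)" using c12 by (intro mult_right_mono) auto
    also have "\<dots> = n^2 / 2" by simp
    finally show ?thesis using Wv by linarith
  next
    case True
    have sqF: "0 < sqrt F" using F1 by simp
    have "sqrt F \<le> sqrt (d * s^2)" using Fd by (rule real_sqrt_le_mono)
    also have "\<dots> = sqrt d * s" using s by (simp add: real_sqrt_mult)
    finally have sF: "sqrt F \<le> sqrt d * s" .
    have "(n/6)^3 \<le> (W / F + 1) * (45 * F * sqrt F)" using Wt True by simp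
    also have "\<dots> = 45 * sqrt F * (W + F)" using F1 by (simp add: field_simps)
    finally have h: "n^3 / 216 \<le> 45 * sqrt F * (W + F)" by (simp add: power_divide)
    have "a * Y * (45 * sqrt F) = n^3 * sqrt F / (216 * sqrt d * s)" unfolding a_def Y_def by (simp add: field_simps)
    also have "\<dots> \<le> n^3 * (sqrt d * s) / (216 * sqrt d * s)" using sF n s sd
      by (intro divide_right_mono mult_left_mono) auto
    also have "\<dots> = n^3 / 216" using sd s by (simp add: field_simps)
    finally have "a * Y * (45 * sqrt F) \<le> (W + F) * (45 * sqrt F)" using h by (simp add: mult.commute)
    then have aY: "a * Y \<le> W + F" using sqF by simp
    show ?thesis
    proof (cases "2 * d * s^2 \<le> a * Y")
      case True
      have "0 \<le> d * s^2" using d by simp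
      then have "a * Y / 2 \<le> W" using aY Fd True by linarith
      moreover have "a / (4 * d) \<le> a / 2" using a1 d by (intro divide_left_mono) auto
      then have "c * Y \<le> a / 2 * Y" unfolding ca using Y0 by (intro mult_right_mono) auto
      ultimately show ?thesis by simp
    next
      case False
      define K0 where "K0 = 2 * d / a"
      have K0: "1 \<le> K0" unfolding K0_def using a1 d by (simp add: field_simps)
      have cK: "c * K0 = 1/2" unfolding ca K0_def using a1 d by (simp add: field_simps)
      define x where "x = n / s"
      have x0: "0 \<le> x" unfolding x_def using n s by simp
      have Yx: "Y = n^2 * x" unfolding Y_def x_def by (simp add: power3_eq_cube power2_eq_square)
      have "a * Y < 2 * d * s^2" using False by simp
      then have "Y < 2 * d * s^2 / a" using a1 by (simp add: field_simps)
      then have "Y / s^2 < 2 * d / a" using s by (simp add: field_simps)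
      moreover have "x^3 = Y / s^2" unfolding x_def Y_def by (simp add: power_divide power3_eq_cube power2_eq_square)
      ultimately have x3: "x^3 < K0" unfolding K0_def by simp
      have xK: "x \<le> K0"
      proof (rule ccontr)
        assume nx: "\<not> x \<le> K0"
        then have x1: "1 \<le> x" using K0 by simp
        have "x * 1 \<le> x * (x * x)" using x1 by (intro mult_left_mono) (auto intro: order_trans[OF x1] simp: mult_mono[OF x1 x1, simplified])
        then have "x \<le> x^3" by (simp add: power3_eq_cube)
        then show False using x3 nx by simp
      qed
      have "c * Y = c * n^2 * x" using Yx by simp
      also have "\<dots> \<le> c * n^2 * K0" using xK c0 by (intro mult_left_mono) auto
      also have "\<dots> = n^2 / 2" using cK by (simp add: field_simps)
      finally show ?thesis using Wv by linarith
    qed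
  qed
  then show ?thesis unfolding c_def Y_def by (simp add: field_simps)
qed


lemma bw_decomp: "step d M \<sigma> c = Some \<sigma>' \<Longrightarrow> bw_instr \<beta> c = (\<Sum>b\<in>{1..d-1}. \<beta> b * real (wlev b c))"
proof (cases c)
  case (Xfer st l a b' w)
  assume s: "step d M \<sigma> c = Some \<sigma>'"
  have l: "1 \<le> l" "l \<le> d - 1" using Xfer_ok[OF s[unfolded Xfer]] by auto
  have "(\<Sum>b\<in>{1..d-1}. \<beta> b * real (wlev b c)) = (\<Sum>b\<in>{1..d-1}. if l = b then \<beta> b * real w else 0)"
    unfolding Xfer wlev_def by (intro sum.cong) auto
  also have "\<dots> = \<beta> l * real w" using l by simp
  finally show ?thesis using Xfer by simp
qed (simp add: wlev_def)

lemma lat_decomp: "step d M \<sigma> c = Some \<sigma>' \<Longrightarrow> lat_instr \<alpha> c = (\<Sum>b\<in>{1..d-1}. \<alpha> b * real (xlev b c))"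
proof (cases c)
  case (Xfer st l a b' w)
  assume s: "step d M \<sigma> c = Some \<sigma>'"
  have l: "1 \<le> l" "l \<le> d - 1" using Xfer_ok[OF s[unfolded Xfer]] by auto
  have "(\<Sum>b\<in>{1..d-1}. \<alpha> b * real (xlev b c)) = (\<Sum>b\<in>{1..d-1}. if l = b then \<alpha> b else 0)"
    unfolding Xfer xlev_def by (intro sum.cong) auto
  also have "\<dots> = \<alpha> l" using l by simp
  finally show ?thesis using Xfer by simp
qed (simp add: xlev_def)

lemma sum_list_map_nth: "sum_list (map f xs) = (\<Sum>t\<in>{0..<length xs}. f (xs!t))"
  by (simp add: sum_list_sum_nth)

lemma powr32: "0 < x \<Longrightarrow> (x::real) powr (3/2) = x * sqrt x"
proof -
  assume x: "0 < x"
  have "x powr (3/2) = x powr (1 + 1/2)" by simp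
  also have "\<dots> = x powr 1 * x powr (1/2)" by (rule powr_add)
  also have "\<dots> = x * sqrt x" using x by (simp add: powr_half_sqrt)
  finally show ?thesis .
qed

lemma per_level:
  fixes n :: nat and M :: "nat \<Rightarrow> nat" and \<alpha> \<beta> :: "nat \<Rightarrow> real" and prog S Lf b
  assumes d1: "1 \<le> d"
  and mono: "\<forall>i j. 1 \<le> i \<longrightarrow> i \<le> j \<longrightarrow> j \<le> d \<longrightarrow> M i \<le> M j \<and> \<beta> i \<le> \<beta> j \<and> \<alpha> i \<le> \<alpha> j"
  and a1: "0 \<le> \<alpha> 1" and b1: "0 \<le> \<beta> 1"
  and cf: "chol_form n Lf"
  and init: "init_state d M n (S 0)"
  and steps: "\<forall>t<length prog. step d M (S t) (prog!t) = Some (S (Suc t))"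
  and dist: "distinct (concat (map (\<lambda>t. op_result (S t) (prog!t)) [0..<length prog]))"
  and ops: "set (concat (map (\<lambda>t. op_result (S t) (prog!t)) [0..<length prog])) = chol_ops n Lf"
  and b: "b \<in> {1..d-1}"
  shows "1 / (38880 * real d * sqrt (real d)) * (\<beta> b * (real n ^ 3 / sqrt (real (M b)) - real (M b)))
           \<le> \<beta> b * real (\<Sum>t\<in>{0..<length prog}. wlev b (prog!t)) \<and>
         1 / (38880 * real d * sqrt (real d)) * (\<alpha> b * (real n ^ 3 / real (M b) powr (3/2)))
           \<le> \<alpha> b * real (\<Sum>t\<in>{0..<length prog}. xlev b (prog!t))"
proof -
  define c where "c = 1 / (38880 * real d * sqrt (real d))"
  define W where "W = (\<Sum>t\<in>{0..<length prog}. wlev b (prog!t))"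
  define K where "K = (\<Sum>t\<in>{0..<length prog}. xlev b (prog!t))"
  have bd: "1 \<le> b" "b < d" "b \<le> d" using b d1 by auto
  have c0: "0 < c" unfolding c_def using d1 by simp
  have bb0: "0 \<le> \<beta> b" "0 \<le> \<alpha> b" using mono[rule_format, of 1 b] bd a1 b1 by auto
  have WK: "real W \<le> real (M b) * real K"
  proof -
    have "real W = (\<Sum>t\<in>{0..<length prog}. real (wlev b (prog!t)))" unfolding W_def by simp
    also have "\<dots> \<le> (\<Sum>t\<in>{0..<length prog}. real (M b) * real (xlev b (prog!t)))"
      by (rule sum_mono) (use xlev_wlev steps in auto)
    also have "\<dots> = real (M b) * real K" unfolding K_def by (simp add: sum_distrib_left)
    finally show ?thesis .
  qed
  show ?thesis
  proof (cases "n = 0")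
    case True
    have "c * (\<beta> b * (0 - real (M b))) \<le> 0" using c0 bb0 by (simp add: mult_nonneg_nonneg)
    moreover have "0 \<le> \<beta> b * real W" using bb0 by simp
    moreover have "0 \<le> \<alpha> b * real K" using bb0 by simp
    ultimately show ?thesis using True unfolding c_def W_def K_def by simp
  next
    case False
    interpret m: mach n Lf d M prog S b
      by (unfold_locales) (use cf init steps dist ops bd in auto)
    have F1: "1 \<le> m.F" using m.F_pos False by simp
    have "m.F \<le> (\<Sum>l\<in>{1..b}. M b)" unfolding m.F_def using mono bd by (intro sum_mono) auto
    then have Fb: "m.F \<le> b * M b" by simp
    have Mb1: "1 \<le> M b" using F1 Fb by (cases "M b") auto
    have Fd: "real m.F \<le> real d * real (M b)"
    proof -
      have "b * M b \<le> d * M b" using bd by simp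
      then show ?thesis using Fb by (metis of_nat_le_iff of_nat_mult order_trans)
    qed
    have Wm: "m.wsum 0 (length prog) = W" unfolding m.wsum_def W_def by simp
    define s where "s = sqrt (real (M b))"
    have s1: "1 \<le> s" unfolding s_def using Mb1 by simp
    have s2: "s^2 = real (M b)" unfolding s_def by simp
    have main: "real n ^ 3 / s / (38880 * real d * sqrt (real d)) \<le> real W"
    proof (rule arith_main)
      show "1 \<le> real d" using d1 by simp
      show "1 \<le> s" by (rule s1)
      show "1 \<le> real m.F" using F1 by simp
      show "real m.F \<le> real d * s^2" using Fd s2 by simp
      show "1 \<le> real n" using False by simp
      show "real n ^ 2 / 2 \<le> real W" using m.W_vars Wm by simp
      assume n6: "6 \<le> real n"
      have "real n - 2 \<le> 3 * real (n div 3)"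
      proof -
        have "n \<le> 3 * (n div 3) + 2" by linarith
        then have "real n \<le> real (3 * (n div 3) + 2)" by (simp only: of_nat_le_iff)
        then show ?thesis by simp
      qed
      then have "real n / 6 \<le> real (n div 3)" using n6 by linarith
      then have "(real n / 6)^3 \<le> real (n div 3) ^ 3" by (intro power_mono) auto
      also have "\<dots> \<le> real (card m.Tset)" by (rule m.Tset_lower)
      also have "\<dots> \<le> (real (m.wsum 0 (length prog)) / real m.F + 1) * (45 * real m.F * sqrt (real m.F))"
        by (rule m.main_count[OF F1])
      finally show "(real n / 6)^3 \<le> (real W / real m.F + 1) * (45 * real m.F * sqrt (real m.F))" using Wm by simp
    qed
    define Y where "Y = real n ^ 3 / s"
    have Y0: "0 \<le> Y" unfolding Y_def using s1 by simp
    have cY: "c * Y \<le> real W" using main unfolding c_def Y_def by (simp add: field_simps)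
    have bw: "c * (\<beta> b * (Y - real (M b))) \<le> \<beta> b * real W"
    proof -
      have "c * (\<beta> b * (Y - real (M b))) = \<beta> b * (c * Y) - c * \<beta> b * real (M b)" by (simp add: algebra_simps)
      also have "\<dots> \<le> \<beta> b * (c * Y)" using c0 bb0 by simp
      also have "\<dots> \<le> \<beta> b * real W" using cY bb0 by (intro mult_left_mono) auto
      finally show ?thesis .
    qed
    have Mp: "real (M b) powr (3/2) = real (M b) * s" unfolding s_def using Mb1 by (intro powr32) simp
    have lat: "c * (\<alpha> b * (real n ^ 3 / real (M b) powr (3/2))) \<le> \<alpha> b * real K"
    proof -
      have Mpos: "0 < real (M b)" using Mb1 by simp
      have "real n ^ 3 / real (M b) powr (3/2) = Y / real (M b)" unfolding Mp Y_def by (simp add: field_simps)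
      then have "c * (\<alpha> b * (real n ^ 3 / real (M b) powr (3/2))) = \<alpha> b * (c * Y / real (M b))" by simp
      also have "\<dots> \<le> \<alpha> b * (real W / real (M b))" using cY Mpos bb0 by (intro mult_left_mono divide_right_mono) auto
      also have "\<dots> \<le> \<alpha> b * real K" using WK Mpos bb0 by (intro mult_left_mono) (auto simp: field_simps)
      finally show ?thesis .
    qed
    show ?thesis using bw lat unfolding c_def W_def K_def Y_def s_def by simp
  qed
qed

theorem corollary3p4:
  fixes d :: nat
  assumes "d \<ge> 1"
  shows "\<exists>c > 0. \<forall>(n::nat) (M::nat \<Rightarrow> nat) (\<alpha>::nat \<Rightarrow> real) (\<beta>::nat \<Rightarrow> real) \<sigma>0 prog.
     (\<forall>i j. 1 \<le> i \<longrightarrow> i \<le> j \<longrightarrow> j \<le> d \<longrightarrow> M i \<le> M j \<and> \<beta> i \<le> \<beta> j \<and> \<alpha> i \<le> \<alpha> j) \<longrightarrow>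
     0 \<le> \<alpha> 1 \<longrightarrow> 0 \<le> \<beta> 1 \<longrightarrow>
     classical_cholesky_alg d M n \<sigma>0 prog \<longrightarrow>
       bandwidth_cost \<beta> prog \<ge>
         c * (\<Sum>i=1..d-1. \<beta> i * (real n ^ 3 / sqrt (real (M i)) - real (M i))) \<and>
       latency_cost \<alpha> prog \<ge>
         c * (\<Sum>i=1..d-1. \<alpha> i * (real n ^ 3 / real (M i) powr (3/2)))"
proof -
  define c where "c = 1 / (38880 * real d * sqrt (real d))"
  have c0: "c > 0" using assms unfolding c_def by simp
  show ?thesis
  proof (rule exI[of _ c], rule conjI[OF c0], intro allI impI)
    fix n :: nat and M :: "nat \<Rightarrow> nat" and \<alpha> \<beta> :: "nat \<Rightarrow> real" and \<sigma>0 :: state and prog :: "instr list"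
    assume mono: "\<forall>i j. 1 \<le> i \<longrightarrow> i \<le> j \<longrightarrow> j \<le> d \<longrightarrow> M i \<le> M j \<and> \<beta> i \<le> \<beta> j \<and> \<alpha> i \<le> \<alpha> j"
      and a1: "0 \<le> \<alpha> 1" and b1: "0 \<le> \<beta> 1" and alg: "classical_cholesky_alg d M n \<sigma>0 prog"
    obtain \<tau> rs where r: "init_state d M n \<sigma>0" "run d M \<sigma>0 prog = Some (\<tau>, rs)" "classical_chol n rs"
      using alg unfolding classical_cholesky_alg_def by blast
    obtain Lf where Lf: "chol_form n Lf" "distinct rs" "set rs = chol_ops n Lf"
      using r(3) unfolding classical_chol_def by blast
    obtain S where S: "S 0 = \<sigma>0" "\<forall>t<length prog. step d M (S t) (prog!t) = Some (S (Suc t))"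
      "rs = concat (map (\<lambda>t. op_result (S t) (prog!t)) [0..<length prog])"
      using run_trace[OF r(2)] by blast
    define W where "W b = (\<Sum>t\<in>{0..<length prog}. wlev b (prog!t))" for b
    define K where "K b = (\<Sum>t\<in>{0..<length prog}. xlev b (prog!t))" for b
    have per: "c * (\<beta> b * (real n ^ 3 / sqrt (real (M b)) - real (M b))) \<le> \<beta> b * real (W b) \<and>
         c * (\<alpha> b * (real n ^ 3 / real (M b) powr (3/2))) \<le> \<alpha> b * real (K b)" if "b \<in> {1..d-1}" for b
      unfolding c_def W_def K_def
      by (rule per_level[OF assms mono a1 b1 Lf(1) _ S(2) _ _ that]) (use S r Lf in auto)
    have bwc: "bandwidth_cost \<beta> prog = (\<Sum>b\<in>{1..d-1}. \<beta> b * real (W b))"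
    proof -
      have "bandwidth_cost \<beta> prog = (\<Sum>t\<in>{0..<length prog}. bw_instr \<beta> (prog!t))"
        unfolding bandwidth_cost_def by (rule sum_list_map_nth)
      also have "\<dots> = (\<Sum>t\<in>{0..<length prog}. \<Sum>b\<in>{1..d-1}. \<beta> b * real (wlev b (prog!t)))"
        by (rule sum.cong) (use bw_decomp S(2) in auto)
      also have "\<dots> = (\<Sum>b\<in>{1..d-1}. \<Sum>t\<in>{0..<length prog}. \<beta> b * real (wlev b (prog!t)))" by (rule sum.swap)
      also have "\<dots> = (\<Sum>b\<in>{1..d-1}. \<beta> b * real (W b))" unfolding W_def by (simp add: sum_distrib_left)
      finally show ?thesis .
    qed
    have latc: "latency_cost \<alpha> prog = (\<Sum>b\<in>{1..d-1}. \<alpha> b * real (K b))"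
    proof -
      have "latency_cost \<alpha> prog = (\<Sum>t\<in>{0..<length prog}. lat_instr \<alpha> (prog!t))"
        unfolding latency_cost_def by (rule sum_list_map_nth)
      also have "\<dots> = (\<Sum>t\<in>{0..<length prog}. \<Sum>b\<in>{1..d-1}. \<alpha> b * real (xlev b (prog!t)))"
        by (rule sum.cong) (use lat_decomp S(2) in auto)
      also have "\<dots> = (\<Sum>b\<in>{1..d-1}. \<Sum>t\<in>{0..<length prog}. \<alpha> b * real (xlev b (prog!t)))" by (rule sum.swap)
      also have "\<dots> = (\<Sum>b\<in>{1..d-1}. \<alpha> b * real (K b))" unfolding K_def by (simp add: sum_distrib_left)
      finally show ?thesis .
    qed
    have "c * (\<Sum>i=1..d-1. \<beta> i * (real n ^ 3 / sqrt (real (M i)) - real (M i)))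
        = (\<Sum>i=1..d-1. c * (\<beta> i * (real n ^ 3 / sqrt (real (M i)) - real (M i))))" by (rule sum_distrib_left)
    also have "\<dots> \<le> (\<Sum>b\<in>{1..d-1}. \<beta> b * real (W b))" by (rule sum_mono) (use per in blast)
    finally have 1: "c * (\<Sum>i=1..d-1. \<beta> i * (real n ^ 3 / sqrt (real (M i)) - real (M i))) \<le> bandwidth_cost \<beta> prog"
      using bwc by simp
    have "c * (\<Sum>i=1..d-1. \<alpha> i * (real n ^ 3 / real (M i) powr (3/2)))
        = (\<Sum>i=1..d-1. c * (\<alpha> i * (real n ^ 3 / real (M i) powr (3/2))))" by (rule sum_distrib_left)
    also have "\<dots> \<le> (\<Sum>b\<in>{1..d-1}. \<alpha> b * real (K b))" by (rule sum_mono) (use per in blast)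
    finally have 2: "c * (\<Sum>i=1..d-1. \<alpha> i * (real n ^ 3 / real (M i) powr (3/2))) \<le> latency_cost \<alpha> prog"
      using latc by simp
    show "c * (\<Sum>i=1..d-1. \<beta> i * (real n ^ 3 / sqrt (real (M i)) - real (M i))) \<le> bandwidth_cost \<beta> prog \<and>
       c * (\<Sum>i=1..d-1. \<alpha> i * (real n ^ 3 / real (M i) powr (3/2))) \<le> latency_cost \<alpha> prog"
      using 1 2 by blast
  qed
qed


end
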